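(* Let $k\ge0$ and $L\subseteq\mathrm{iiPoms}_{\le k}$. For $P\in\mathrm{iiPoms}_{\le k}$ let $P\backslash L=\{Q\in\mathrm{iiPoms}_{\le k}\mid S_Q=T_P,\ P*Q\in L\}$ and $\mathrm{suff}(L)=\{P\backslash L\mid P\in\mathrm{iiPoms}_{\le k}\}$. Then $\mathrm{suff}(L)$ is an $\mathrm{iiPoms}_{\le k}$-module via $\mathrm{src}(P\backslash L)=S_P$, $\mathrm{tgt}(P\backslash L)=T_P$, $(P\backslash L)\cdot Q=(P*Q)\backslash L$, and the triple $(\mathrm{suff}(L),J,\varphi)$ with $J=\{P\backslash L\mid P\in L\}$ and $\varphi(P)=P\backslash L$ recognizes $L$, i.e. $\varphi$ is a module homomorphism and $L=\varphi^{-1}(J)$. Moreover, for any $\mathrm{iiPoms}_{\le k}$-module $M$, subset $K\subseteq M$ and surjective module homomorphism $\psi:\mathrm{iiPoms}_{\le k}\to M$ with $L=\psi^{-1}(K)$, there is a module homomorphism $f:M\to\mathrm{suff}(L)$ such that $f(M)=\mathrm{suff}(L)$, $f(K)=J$ and $f\circ\psi=\varphi$.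
   Context: Fix a finite alphabet $\Sigma$. Pomsets $(P,<,\dashrightarrow,\lambda,S,T)$: $P$ finite, $<$ a strict partial interval order, $\dashrightarrow$ acyclic relating (in one direction) distinct $<$-incomparable elements, $\lambda:P\to\Sigma$, $S$/$T$ sets of $<$-minimal/maximal elements viewed as conclists (finite totally ordered labelled sets), up to isomorphism. $\mathrm{iiPoms}$ is the category with objects conclists, morphisms $U\to V$ the pomsets with source $U$ and target $V$, composition the gluing $P*Q$ (identify $T_P$ with $S_Q$; precedence $<_P\cup<_Q\cup(P\setminus T_P)\times(Q\setminus S_Q)$; event orders and labels united; source $S_P$, target $T_Q$), identities $\mathrm{id}_U=(U,\emptyset,\dashrightarrow,\lambda,U,U)$. $\mathrm{iiPoms}_{\le k}$: pomsets whose $<$-antichains have size $\le k$. A $\mathcal C$-module ($\mathcal C$ small category) is a set $M$ with $\mathrm{src},\mathrm{tgt}:M\to\mathrm{Ob}(\mathcal C)$ and actions $M(U,V)\times\mathcal C(V,W)\to M(U,W)$ ($M(U,V)=\mathrm{src}^{-1}(U)\cap\mathrm{tgt}^{-1}(V)$), $(m,\alpha)\mapsto m\cdot\alpha$, with $m\cdot\mathrm{id}_V=m$ and $(m\cdot\alpha)\cdot\beta=m\cdot(\alpha\beta)$ (composition written diagrammatically). A homomorphism preserves $\mathrm{src},\mathrm{tgt}$ and commutes with the action. $\mathrm{iiPoms}_{\le k}$ is a module over itself via $\mathrm{src}(P)=S_P$, $\mathrm{tgt}(P)=T_P$, $P\cdot Q=P*Q$. An element $P\backslash L$ of $\mathrm{suff}(L)$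 is understood as carrying its interfaces $(S_P,T_P)$, so that $\mathrm{src},\mathrm{tgt}$ are well defined. *)

theory Defs
  imports Main
begin

text \<open>A concrete pomset with interfaces over events from nat.
  prec is the precedence order, evo the event order, lab the labelling,
  srcI / tgtI the source and target interfaces.\<close>

record 'a ipom =
  ev   :: "nat set"
  prec :: "(nat \<times> nat) set"
  evo  :: "(nat \<times> nat) set"
  lab  :: "nat \<Rightarrow> 'a"
  srcI :: "nat set"
  tgtI :: "nat set"

definition wf_ipom :: "('a, 'b) ipom_scheme \<Rightarrow> bool" where
  "wf_ipom P \<longleftrightarrow>
     finite (ev P) \<and>
     prec P \<subseteq> ev P \<times> ev P \<and> evo P \<subseteq> ev P \<times> ev P \<and>
     (\<forall>x. (x, x) \<notin> prec P) \<and> trans (prec P) \<and>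
     (\<forall>w x y z. (w, x) \<in> prec P \<longrightarrow> (y, z) \<in> prec P \<longrightarrow>
                 (w, z) \<in> prec P \<or> (y, x) \<in> prec P) \<and>
     acyclic (evo P) \<and>
     (\<forall>x y. (x, y) \<in> evo P \<longrightarrow> (x, y) \<notin> prec P \<and> (y, x) \<notin> prec P) \<and>
     (\<forall>x\<in>ev P. \<forall>y\<in>ev P. x \<noteq> y \<longrightarrow>
        (x, y) \<in> prec P \<or> (y, x) \<in> prec P \<or> (x, y) \<in> evo P \<or> (y, x) \<in> evo P) \<and>
     srcI P \<subseteq> ev P \<and> tgtI P \<subseteq> ev P \<and>
     (\<forall>x\<in>srcI P. \<forall>y. (y, x) \<notin> prec P) \<and>
     (\<forall>x\<in>tgtI P. \<forall>y. (x, y) \<notin> prec P)"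

definition width_le :: "nat \<Rightarrow> 'a ipom \<Rightarrow> bool" where
  "width_le k P \<longleftrightarrow>
     (\<forall>A. A \<subseteq> ev P \<longrightarrow> (\<forall>x\<in>A. \<forall>y\<in>A. (x, y) \<notin> prec P) \<longrightarrow> card A \<le> k)"

definition ipom_iso :: "'a ipom \<Rightarrow> 'a ipom \<Rightarrow> bool" where
  "ipom_iso P Q \<longleftrightarrow> (\<exists>f. bij_betw f (ev P) (ev Q) \<and>
     (\<forall>x\<in>ev P. \<forall>y\<in>ev P. ((x, y) \<in> prec P \<longleftrightarrow> (f x, f y) \<in> prec Q)) \<and>
     (\<forall>x\<in>ev P. \<forall>y\<in>ev P. ((x, y) \<in> evo P \<longleftrightarrow> (f x, f y) \<in> evo Q)) \<and>
     (\<forall>x\<in>ev P. lab Q (f x) = lab P x) \<and>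
     f ` srcI P = srcI Q \<and> f ` tgtI P = tgtI Q)"

text \<open>Pomsets (up to isomorphism) are isomorphism classes of well-formed representatives.\<close>
type_synonym 'a pom = "'a ipom set"

definition cls :: "'a ipom \<Rightarrow> 'a pom" where
  "cls P = {Q. wf_ipom Q \<and> ipom_iso P Q}"

definition rep :: "'a pom \<Rightarrow> 'a ipom" where
  "rep X = (SOME P. P \<in> X)"

definition iiPoms :: "nat \<Rightarrow> 'a pom set" where
  "iiPoms k = {cls P | P. wf_ipom P \<and> width_le k P}"

definition is_conc :: "'a ipom \<Rightarrow> bool" where
  "is_conc U \<longleftrightarrow> prec U = {} \<and> srcI U = ev U \<and> tgtI U = ev U"

definition iiObj :: "nat \<Rightarrow> 'a pom set" where
  "iiObj k = {cls U | U. wf_ipom U \<and> is_conc U \<and> card (ev U) \<le> k}"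

definition conc_of :: "'a ipom \<Rightarrow> nat set \<Rightarrow> 'a ipom" where
  "conc_of P A = \<lparr>ev = A, prec = {}, evo = evo P \<inter> (A \<times> A), lab = lab P,
                  srcI = A, tgtI = A\<rparr>"

definition pomS :: "'a pom \<Rightarrow> 'a pom" where
  "pomS X = cls (conc_of (rep X) (srcI (rep X)))"

definition pomT :: "'a pom \<Rightarrow> 'a pom" where
  "pomT X = cls (conc_of (rep X) (tgtI (rep X)))"

text \<open>Identity on a conclist U: the pomset (U, empty, evo, lab, U, U), which in this
  encoding is the very same class as the object U.\<close>
definition idP :: "'a pom \<Rightarrow> 'a pom" where
  "idP U = U"

text \<open>R is a gluing of P and Q: disjoint copies of P and Q with T_P identified with S_Q
  along an isomorphism of conclists.\<close>
definition is_glue :: "'a ipom \<Rightarrow> 'a ipom \<Rightarrow> 'a ipom \<Rightarrow> bool" where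
  "is_glue P Q R \<longleftrightarrow> (\<exists>f g. inj_on f (ev P) \<and> inj_on g (ev Q) \<and>
     ev R = f ` ev P \<union> g ` ev Q \<and>
     f ` ev P \<inter> g ` ev Q = f ` tgtI P \<and> g ` srcI Q = f ` tgtI P \<and>
     (\<forall>x\<in>tgtI P. \<forall>x'\<in>tgtI P. \<forall>y\<in>srcI Q. \<forall>y'\<in>srcI Q.
        f x = g y \<longrightarrow> f x' = g y' \<longrightarrow> ((x, x') \<in> evo P \<longleftrightarrow> (y, y') \<in> evo Q)) \<and>
     prec R = map_prod f f ` prec P \<union> map_prod g g ` prec Q \<union>
              (f ` (ev P - tgtI P)) \<times> (g ` (ev Q - srcI Q)) \<and>
     evo R = map_prod f f ` evo P \<union> map_prod g g ` evo Q \<and>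
     (\<forall>x\<in>ev P. lab R (f x) = lab P x) \<and> (\<forall>y\<in>ev Q. lab R (g y) = lab Q y) \<and>
     srcI R = f ` srcI P \<and> tgtI R = g ` tgtI Q)"

definition glue :: "'a ipom \<Rightarrow> 'a ipom \<Rightarrow> 'a ipom" where
  "glue P Q = (SOME R. is_glue P Q R)"

definition pcomp :: "'a pom \<Rightarrow> 'a pom \<Rightarrow> 'a pom" where
  "pcomp X Y = cls (glue (rep X) (rep Y))"

text \<open>Category given by objects Ob, morphisms Mor, domain/codomain, diagrammatic
  composition cmp and identities idm.\<close>
definition module_over ::
  "'o set \<Rightarrow> 'c set \<Rightarrow> ('c \<Rightarrow> 'o) \<Rightarrow> ('c \<Rightarrow> 'o) \<Rightarrow> ('c \<Rightarrow> 'c \<Rightarrow> 'c) \<Rightarrow> ('o \<Rightarrow> 'c) \<Rightarrow>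
   'm set \<Rightarrow> ('m \<Rightarrow> 'o) \<Rightarrow> ('m \<Rightarrow> 'o) \<Rightarrow> ('m \<Rightarrow> 'c \<Rightarrow> 'm) \<Rightarrow> bool" where
  "module_over Ob Mor dm cd cmp idm M s t act \<longleftrightarrow>
     (\<forall>m\<in>M. s m \<in> Ob \<and> t m \<in> Ob) \<and>
     (\<forall>m\<in>M. \<forall>\<alpha>\<in>Mor. dm \<alpha> = t m \<longrightarrow>
        act m \<alpha> \<in> M \<and> s (act m \<alpha>) = s m \<and> t (act m \<alpha>) = cd \<alpha>) \<and>
     (\<forall>m\<in>M. act m (idm (t m)) = m) \<and>
     (\<forall>m\<in>M. \<forall>\<alpha>\<in>Mor. \<forall>\<beta>\<in>Mor. dm \<alpha> = t m \<longrightarrow> dm \<beta> = cd \<alpha> \<longrightarrow>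
        act (act m \<alpha>) \<beta> = act m (cmp \<alpha> \<beta>))"

definition module_hom ::
  "'c set \<Rightarrow> ('c \<Rightarrow> 'o) \<Rightarrow>
   'm set \<Rightarrow> ('m \<Rightarrow> 'o) \<Rightarrow> ('m \<Rightarrow> 'o) \<Rightarrow> ('m \<Rightarrow> 'c \<Rightarrow> 'm) \<Rightarrow>
   'n set \<Rightarrow> ('n \<Rightarrow> 'o) \<Rightarrow> ('n \<Rightarrow> 'o) \<Rightarrow> ('n \<Rightarrow> 'c \<Rightarrow> 'n) \<Rightarrow> ('m \<Rightarrow> 'n) \<Rightarrow> bool" where
  "module_hom Mor dm M s t act N s' t' act' h \<longleftrightarrow>
     (\<forall>m\<in>M. h m \<in> N \<and> s' (h m) = s m \<and> t' (h m) = t m) \<and>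
     (\<forall>m\<in>M. \<forall>\<alpha>\<in>Mor. dm \<alpha> = t m \<longrightarrow> h (act m \<alpha>) = act' (h m) \<alpha>)"

text \<open>P \ L, carrying its interfaces (S_P, T_P).\<close>
definition res :: "nat \<Rightarrow> 'a pom set \<Rightarrow> 'a pom \<Rightarrow> 'a pom \<times> 'a pom \<times> 'a pom set" where
  "res k L P = (pomS P, pomT P, {Q \<in> iiPoms k. pomS Q = pomT P \<and> pcomp P Q \<in> L})"

definition suff :: "nat \<Rightarrow> 'a pom set \<Rightarrow> ('a pom \<times> 'a pom \<times> 'a pom set) set" where
  "suff k L = res k L ` iiPoms k"

definition suff_src :: "'a pom \<times> 'a pom \<times> 'a pom set \<Rightarrow> 'a pom" where
  "suff_src m = fst m"

definition suff_tgt :: "'a pom \<times> 'a pom \<times> 'a pom set \<Rightarrow> 'a pom" where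
  "suff_tgt m = fst (snd m)"

definition suff_act :: "nat \<Rightarrow> 'a pom set \<Rightarrow> 'a pom \<times> 'a pom \<times> 'a pom set \<Rightarrow> 'a pom
                        \<Rightarrow> 'a pom \<times> 'a pom \<times> 'a pom set" where
  "suff_act k L m Q = res k L (pcomp (SOME P. P \<in> iiPoms k \<and> res k L P = m) Q)"

end

theory Submission
  imports Defs
begin


definition isoW :: "'a ipom \<Rightarrow> 'a ipom \<Rightarrow> (nat \<Rightarrow> nat) \<Rightarrow> bool" where
  "isoW P Q f \<longleftrightarrow> bij_betw f (ev P) (ev Q) \<and>
     (\<forall>x\<in>ev P. \<forall>y\<in>ev P. ((x, y) \<in> prec P \<longleftrightarrow> (f x, f y) \<in> prec Q)) \<and>
     (\<forall>x\<in>ev P. \<forall>y\<in>ev P. ((x, y) \<in> evo P \<longleftrightarrow> (f x, f y) \<in> evo Q)) \<and>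
     (\<forall>x\<in>ev P. lab Q (f x) = lab P x) \<and>
     f ` srcI P = srcI Q \<and> f ` tgtI P = tgtI Q"

lemma iso_W: "ipom_iso P Q \<longleftrightarrow> (\<exists>f. isoW P Q f)"
  unfolding ipom_iso_def isoW_def by (rule refl)

lemma img_cancel: "(\<And>x. x \<in> A \<Longrightarrow> g (f x) = x) \<Longrightarrow> g ` f ` A = A"
  by (simp add: image_image)
lemma img_comp2: "(\<lambda>x. g (f x)) ` A = g ` f ` A"
  by (simp add: image_image)

lemma iso_refl: "ipom_iso P P"
  unfolding ipom_iso_def by (rule exI[of _ id]) auto

lemma iso_sym:
  assumes w: "wf_ipom P" and i: "ipom_iso P Q"
  shows "ipom_iso Q P"
proof -
  obtain f where b: "bij_betw f (ev P) (ev Q)"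
    and pr: "\<forall>x\<in>ev P. \<forall>y\<in>ev P. ((x, y) \<in> prec P \<longleftrightarrow> (f x, f y) \<in> prec Q)"
    and eo: "\<forall>x\<in>ev P. \<forall>y\<in>ev P. ((x, y) \<in> evo P \<longleftrightarrow> (f x, f y) \<in> evo Q)"
    and lb: "\<forall>x\<in>ev P. lab Q (f x) = lab P x"
    and s: "f ` srcI P = srcI Q" and t: "f ` tgtI P = tgtI Q"
    using i unfolding iso_W isoW_def by metis
  define g where "g = inv_into (ev P) f"
  have bg: "bij_betw g (ev Q) (ev P)" unfolding g_def by (rule bij_betw_inv_into[OF b])
  have fg: "\<And>y. y \<in> ev Q \<Longrightarrow> f (g y) = y" unfolding g_def
    using b by (simp add: bij_betw_def f_inv_into_f)
  have gf: "\<And>x. x \<in> ev P \<Longrightarrow> g (f x) = x" unfolding g_def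
    using b by (simp add: bij_betw_def inv_into_f_f)
  have gin: "\<And>y. y \<in> ev Q \<Longrightarrow> g y \<in> ev P" using bg by (auto simp: bij_betw_def)
  have sP: "srcI P \<subseteq> ev P" "tgtI P \<subseteq> ev P" using w unfolding wf_ipom_def by auto
  have "g ` srcI Q = srcI P" unfolding s[symmetric]
    using sP(1) gf by (intro img_cancel) blast
  moreover have "g ` tgtI Q = tgtI P" unfolding t[symmetric]
    using sP(2) gf by (intro img_cancel) blast
  moreover have "\<forall>x\<in>ev Q. \<forall>y\<in>ev Q. ((x, y) \<in> prec Q \<longleftrightarrow> (g x, g y) \<in> prec P)"
  proof (intro ballI)
    fix x y assume "x \<in> ev Q" "y \<in> ev Q"
    then show "((x, y) \<in> prec Q \<longleftrightarrow> (g x, g y) \<in> prec P)"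
      using pr[rule_format, OF gin gin] fg by simp
  qed
  moreover have "\<forall>x\<in>ev Q. \<forall>y\<in>ev Q. ((x, y) \<in> evo Q \<longleftrightarrow> (g x, g y) \<in> evo P)"
  proof (intro ballI)
    fix x y assume "x \<in> ev Q" "y \<in> ev Q"
    then show "((x, y) \<in> evo Q \<longleftrightarrow> (g x, g y) \<in> evo P)"
      using eo[rule_format, OF gin gin] fg by simp
  qed
  moreover have "\<forall>x\<in>ev Q. lab P (g x) = lab Q x"
  proof
    fix x assume "x \<in> ev Q"
    then show "lab P (g x) = lab Q x" using lb[rule_format, OF gin] fg by simp
  qed
  ultimately show ?thesis unfolding ipom_iso_def using bg by blast
qed

lemma iso_trans:
  assumes "ipom_iso P Q" "ipom_iso Q R" shows "ipom_iso P R"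
proof -
  obtain f where b: "bij_betw f (ev P) (ev Q)"
    and pr: "\<forall>x\<in>ev P. \<forall>y\<in>ev P. ((x, y) \<in> prec P \<longleftrightarrow> (f x, f y) \<in> prec Q)"
    and eo: "\<forall>x\<in>ev P. \<forall>y\<in>ev P. ((x, y) \<in> evo P \<longleftrightarrow> (f x, f y) \<in> evo Q)"
    and lb: "\<forall>x\<in>ev P. lab Q (f x) = lab P x"
    and s: "f ` srcI P = srcI Q" and t: "f ` tgtI P = tgtI Q"
    using assms(1) unfolding iso_W isoW_def by metis
  obtain g where b2: "bij_betw g (ev Q) (ev R)"
    and pr2: "\<forall>x\<in>ev Q. \<forall>y\<in>ev Q. ((x, y) \<in> prec Q \<longleftrightarrow> (g x, g y) \<in> prec R)"
    and eo2: "\<forall>x\<in>ev Q. \<forall>y\<in>ev Q. ((x, y) \<in> evo Q \<longleftrightarrow> (g x, g y) \<in> evo R)"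
    and lb2: "\<forall>x\<in>ev Q. lab R (g x) = lab Q x"
    and s2: "g ` srcI Q = srcI R" and t2: "g ` tgtI Q = tgtI R"
    using assms(2) unfolding iso_W isoW_def by metis
  have fin: "\<And>x. x \<in> ev P \<Longrightarrow> f x \<in> ev Q" using b by (auto simp: bij_betw_def)
  show ?thesis unfolding ipom_iso_def
    apply (rule exI[of _ "g \<circ> f"])
    using bij_betw_trans[OF b b2] pr pr2 eo eo2 lb lb2 s s2 t t2 fin
    by (simp add: img_comp2)
qed

lemma cls_mem: "wf_ipom P \<Longrightarrow> P \<in> cls P"
  unfolding cls_def by (simp add: iso_refl)

lemma cls_eq_iff:
  assumes "wf_ipom P" "wf_ipom Q"
  shows "cls P = cls Q \<longleftrightarrow> ipom_iso P Q"
proof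
  assume "cls P = cls Q"
  then have "Q \<in> cls P" using cls_mem[OF assms(2)] by simp
  then show "ipom_iso P Q" unfolding cls_def by simp
next
  assume i: "ipom_iso P Q"
  have "ipom_iso Q P" using iso_sym[OF assms(1) i] .
  show "cls P = cls Q" unfolding cls_def using i \<open>ipom_iso Q P\<close>
    by (auto intro: iso_trans)
qed

lemma rep_cls:
  assumes "wf_ipom P"
  shows "wf_ipom (rep (cls P)) \<and> ipom_iso P (rep (cls P))"
proof -
  have "rep (cls P) \<in> cls P" unfolding rep_def using cls_mem[OF assms] by (rule someI)
  then show ?thesis unfolding cls_def by simp
qed

lemma cls_rep: "wf_ipom P \<Longrightarrow> cls (rep (cls P)) = cls P"
  using rep_cls cls_eq_iff by metis


lemma wf_parts:
  assumes "wf_ipom P"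
  shows "finite (ev P) \<and>
     prec P \<subseteq> ev P \<times> ev P \<and> evo P \<subseteq> ev P \<times> ev P \<and>
     (\<forall>x. (x, x) \<notin> prec P) \<and> trans (prec P) \<and>
     (\<forall>w x y z. (w, x) \<in> prec P \<longrightarrow> (y, z) \<in> prec P \<longrightarrow>
                 (w, z) \<in> prec P \<or> (y, x) \<in> prec P) \<and>
     acyclic (evo P) \<and>
     (\<forall>x y. (x, y) \<in> evo P \<longrightarrow> (x, y) \<notin> prec P \<and> (y, x) \<notin> prec P) \<and>
     (\<forall>x\<in>ev P. \<forall>y\<in>ev P. x \<noteq> y \<longrightarrow>
        (x, y) \<in> prec P \<or> (y, x) \<in> prec P \<or> (x, y) \<in> evo P \<or> (y, x) \<in> evo P) \<and>
     srcI P \<subseteq> ev P \<and> tgtI P \<subseteq> ev P \<and>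
     (\<forall>x\<in>srcI P. \<forall>y. (y, x) \<notin> prec P) \<and>
     (\<forall>x\<in>tgtI P. \<forall>y. (x, y) \<notin> prec P)"
  using assms unfolding wf_ipom_def .
lemmas wfp = wf_parts[THEN conjunct1] wf_parts[THEN conjunct2, THEN conjunct1]
  wf_parts[THEN conjunct2, THEN conjunct2, THEN conjunct1]
  wf_parts[THEN conjunct2, THEN conjunct2, THEN conjunct2, THEN conjunct1]
  wf_parts[THEN conjunct2, THEN conjunct2, THEN conjunct2, THEN conjunct2, THEN conjunct1]
  wf_parts[THEN conjunct2, THEN conjunct2, THEN conjunct2, THEN conjunct2, THEN conjunct2, THEN conjunct1]
  wf_parts[THEN conjunct2, THEN conjunct2, THEN conjunct2, THEN conjunct2, THEN conjunct2, THEN conjunct2, THEN conjunct1]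
  wf_parts[THEN conjunct2, THEN conjunct2, THEN conjunct2, THEN conjunct2, THEN conjunct2, THEN conjunct2, THEN conjunct2, THEN conjunct1]
  wf_parts[THEN conjunct2, THEN conjunct2, THEN conjunct2, THEN conjunct2, THEN conjunct2, THEN conjunct2, THEN conjunct2, THEN conjunct2, THEN conjunct1]
  wf_parts[THEN conjunct2, THEN conjunct2, THEN conjunct2, THEN conjunct2, THEN conjunct2, THEN conjunct2, THEN conjunct2, THEN conjunct2, THEN conjunct2, THEN conjunct1]
  wf_parts[THEN conjunct2, THEN conjunct2, THEN conjunct2, THEN conjunct2, THEN conjunct2, THEN conjunct2, THEN conjunct2, THEN conjunct2, THEN conjunct2, THEN conjunct2, THEN conjunct1]
  wf_parts[THEN conjunct2, THEN conjunct2, THEN conjunct2, THEN conjunct2, THEN conjunct2, THEN conjunct2, THEN conjunct2, THEN conjunct2, THEN conjunct2, THEN conjunct2, THEN conjunct2, THEN conjunct1]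
  wf_parts[THEN conjunct2, THEN conjunct2, THEN conjunct2, THEN conjunct2, THEN conjunct2, THEN conjunct2, THEN conjunct2, THEN conjunct2, THEN conjunct2, THEN conjunct2, THEN conjunct2, THEN conjunct2]

lemma wf_fin: "wf_ipom P \<Longrightarrow> finite (ev P)"
  by (rule wfp(1))
lemma wf_precD: "wf_ipom P \<Longrightarrow> (x, y) \<in> prec P \<Longrightarrow> x \<in> ev P \<and> y \<in> ev P"
  by (drule wfp(2)) blast 
lemma wf_evoD: "wf_ipom P \<Longrightarrow> (x, y) \<in> evo P \<Longrightarrow> x \<in> ev P \<and> y \<in> ev P"
  by (drule wfp(3)) blast 
lemma wf_irr: "wf_ipom P \<Longrightarrow> (x, x) \<notin> prec P"
  by (drule wfp(4)) blast
lemma wf_trans: "wf_ipom P \<Longrightarrow> (x, y) \<in> prec P \<Longrightarrow> (y, z) \<in> prec P \<Longrightarrow> (x, z) \<in> prec P"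
  using wfp(5) by (meson transE)
lemma wf_ivl: "wf_ipom P \<Longrightarrow> (w, x) \<in> prec P \<Longrightarrow> (y, z) \<in> prec P \<Longrightarrow> (w, z) \<in> prec P \<or> (y, x) \<in> prec P"
  by (drule wfp(6)) blast
lemma wf_acyc: "wf_ipom P \<Longrightarrow> acyclic (evo P)"
  by (rule wfp(7))
lemma wf_evo_np: "wf_ipom P \<Longrightarrow> (x, y) \<in> evo P \<Longrightarrow> (x, y) \<notin> prec P \<and> (y, x) \<notin> prec P"
  by (drule wfp(8)) blast
lemma wf_total: "wf_ipom P \<Longrightarrow> x \<in> ev P \<Longrightarrow> y \<in> ev P \<Longrightarrow> x \<noteq> y \<Longrightarrow>
        (x, y) \<in> prec P \<or> (y, x) \<in> prec P \<or> (x, y) \<in> evo P \<or> (y, x) \<in> evo P"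
  by (drule wfp(9)) blast
lemma wf_src: "wf_ipom P \<Longrightarrow> srcI P \<subseteq> ev P"
  by (rule wfp(10))
lemma wf_tgt: "wf_ipom P \<Longrightarrow> tgtI P \<subseteq> ev P"
  by (rule wfp(11))
lemma wf_srcmin: "wf_ipom P \<Longrightarrow> x \<in> srcI P \<Longrightarrow> (y, x) \<notin> prec P"
  by (drule wfp(12)) blast
lemma wf_tgtmax: "wf_ipom P \<Longrightarrow> x \<in> tgtI P \<Longrightarrow> (x, y) \<notin> prec P"
  by (drule wfp(13)) blast

lemma wf_evo_irr: "wf_ipom P \<Longrightarrow> (x, x) \<notin> evo P"
  using wf_acyc unfolding acyclic_def by blast

lemma wf_evo_asym: "wf_ipom P \<Longrightarrow> (x, y) \<in> evo P \<Longrightarrow> (y, x) \<notin> evo P"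
proof
  assume w: "wf_ipom P" and a: "(x, y) \<in> evo P" "(y, x) \<in> evo P"
  then have "(x, x) \<in> (evo P)\<^sup>+" by (meson trancl.r_into_trancl trancl_into_trancl)
  then show False using wf_acyc[OF w] unfolding acyclic_def by blast
qed

definition Sc :: "'a ipom \<Rightarrow> 'a ipom" where "Sc P = conc_of P (srcI P)"
definition Tc :: "'a ipom \<Rightarrow> 'a ipom" where "Tc P = conc_of P (tgtI P)"

lemma conc_of_simps[simp]:
  "ev (conc_of P A) = A" "prec (conc_of P A) = {}" "evo (conc_of P A) = evo P \<inter> (A \<times> A)"
  "lab (conc_of P A) = lab P" "srcI (conc_of P A) = A" "tgtI (conc_of P A) = A"
  unfolding conc_of_def by simp_all

lemma wf_conc_of:
  assumes w: "wf_ipom P" and A: "A \<subseteq> ev P" and ac: "\<forall>x\<in>A. \<forall>y\<in>A. (x, y) \<notin> prec P"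
  shows "wf_ipom (conc_of P A)"
proof -
  have "finite A" using A wf_fin[OF w] finite_subset by blast
  moreover have "acyclic (evo P \<inter> A \<times> A)" using wf_acyc[OF w] acyclic_subset by blast
  moreover have "\<forall>x\<in>A. \<forall>y\<in>A. x \<noteq> y \<longrightarrow> (x, y) \<in> evo P \<or> (y, x) \<in> evo P"
  proof (intro ballI impI)
    fix x y assume "x \<in> A" "y \<in> A" "x \<noteq> y"
    then show "(x, y) \<in> evo P \<or> (y, x) \<in> evo P"
      using wf_total[OF w, of x y] A ac by (auto simp: subset_iff)
  qed
  ultimately show ?thesis unfolding wf_ipom_def conc_of_simps
    apply (intro conjI)
    using A by (simp_all add: trans_def)
qed

lemma src_ac: "wf_ipom P \<Longrightarrow> \<forall>x\<in>srcI P. \<forall>y\<in>srcI P. (x, y) \<notin> prec P"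
  using wf_srcmin by blast
lemma tgt_ac: "wf_ipom P \<Longrightarrow> \<forall>x\<in>tgtI P. \<forall>y\<in>tgtI P. (x, y) \<notin> prec P"
  using wf_tgtmax by blast

lemma wf_Sc: "wf_ipom P \<Longrightarrow> wf_ipom (Sc P)"
  unfolding Sc_def by (rule wf_conc_of[OF _ wf_src src_ac])
lemma wf_Tc: "wf_ipom P \<Longrightarrow> wf_ipom (Tc P)"
  unfolding Tc_def by (rule wf_conc_of[OF _ wf_tgt tgt_ac])

lemma isoW_conc_of:
  assumes i: "isoW P Q f" and A: "A \<subseteq> ev P"
  shows "isoW (conc_of P A) (conc_of Q (f ` A)) f"
proof -
  have b: "bij_betw f (ev P) (ev Q)" using i unfolding isoW_def by blast
  have bA: "bij_betw f A (f ` A)" using b A by (meson bij_betw_def bij_betw_subset)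
  have inj: "inj_on f (ev P)" using b bij_betw_def by blast
  have eo: "\<forall>x\<in>ev P. \<forall>y\<in>ev P. ((x, y) \<in> evo P \<longleftrightarrow> (f x, f y) \<in> evo Q)"
    and lb: "\<forall>x\<in>ev P. lab Q (f x) = lab P x" using i unfolding isoW_def by blast+
  have "\<forall>x\<in>A. \<forall>y\<in>A. ((x, y) \<in> evo P \<inter> A \<times> A \<longleftrightarrow> (f x, f y) \<in> evo Q \<inter> f ` A \<times> f ` A)"
    using eo A by blast
  moreover have "\<forall>x\<in>A. lab Q (f x) = lab P x" using lb A by blast
  ultimately show ?thesis unfolding isoW_def conc_of_simps using bA by simp
qed

lemma iso_Sc:
  assumes w: "wf_ipom P" and i: "ipom_iso P Q"
  shows "ipom_iso (Sc P) (Sc Q)"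
proof -
  obtain f where f: "isoW P Q f" using i iso_W by blast
  have e: "f ` srcI P = srcI Q" using f unfolding isoW_def by blast
  have "isoW (conc_of P (srcI P)) (conc_of Q (f ` srcI P)) f" by (rule isoW_conc_of[OF f wf_src[OF w]])
  then show ?thesis unfolding iso_W Sc_def e by blast
qed
lemma iso_Tc:
  assumes w: "wf_ipom P" and i: "ipom_iso P Q"
  shows "ipom_iso (Tc P) (Tc Q)"
proof -
  obtain f where f: "isoW P Q f" using i iso_W by blast
  have e: "f ` tgtI P = tgtI Q" using f unfolding isoW_def by blast
  have "isoW (conc_of P (tgtI P)) (conc_of Q (f ` tgtI P)) f" by (rule isoW_conc_of[OF f wf_tgt[OF w]])
  then show ?thesis unfolding iso_W Tc_def e by blast
qed

lemma pomS_cls: "wf_ipom P \<Longrightarrow> pomS (cls P) = cls (Sc P)"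
proof -
  assume w: "wf_ipom P"
  have r: "wf_ipom (rep (cls P))" "ipom_iso P (rep (cls P))" using rep_cls[OF w] by blast+
  have "ipom_iso (Sc P) (Sc (rep (cls P)))" using iso_Sc[OF w r(2)] .
  then have "cls (Sc (rep (cls P))) = cls (Sc P)"
    using cls_eq_iff wf_Sc w r(1) by metis
  then show ?thesis unfolding pomS_def Sc_def by simp
qed

lemma pomT_cls: "wf_ipom P \<Longrightarrow> pomT (cls P) = cls (Tc P)"
proof -
  assume w: "wf_ipom P"
  have r: "wf_ipom (rep (cls P))" "ipom_iso P (rep (cls P))" using rep_cls[OF w] by blast+
  have "ipom_iso (Tc P) (Tc (rep (cls P)))" using iso_Tc[OF w r(2)] .
  then have "cls (Tc (rep (cls P))) = cls (Tc P)"
    using cls_eq_iff wf_Tc w r(1) by metis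
  then show ?thesis unfolding pomT_def Tc_def by simp
qed

lemma width_iso:
  assumes wd: "width_le k P" and i: "ipom_iso Q P"
  shows "width_le k Q"
proof -
  obtain g where g: "isoW Q P g" using i iso_W by blast
  have b: "bij_betw g (ev Q) (ev P)" using g unfolding isoW_def by (rule conjunct1)
  have inj: "inj_on g (ev Q)" using b by (rule bij_betw_imp_inj_on)
  have gin: "g ` ev Q = ev P" using b by (rule bij_betw_imp_surj_on)
  have pr: "\<forall>x\<in>ev Q. \<forall>y\<in>ev Q. ((x, y) \<in> prec Q \<longleftrightarrow> (g x, g y) \<in> prec P)"
    using g unfolding isoW_def by (elim conjE)
  show ?thesis unfolding width_le_def
  proof (intro allI impI)
    fix A assume A: "A \<subseteq> ev Q" and ac: "\<forall>x\<in>A. \<forall>y\<in>A. (x, y) \<notin> prec Q"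
    have "g ` A \<subseteq> ev P" using A gin by blast
    moreover have "\<forall>x\<in>g ` A. \<forall>y\<in>g ` A. (x, y) \<notin> prec P"
    proof (intro ballI)
      fix x y assume "x \<in> g ` A" "y \<in> g ` A"
      then obtain a b where ab: "a \<in> A" "b \<in> A" "x = g a" "y = g b" by blast
      have "a \<in> ev Q" "b \<in> ev Q" using ab A by auto
      then have "(a, b) \<in> prec Q \<longleftrightarrow> (g a, g b) \<in> prec P" using pr by blast
      then show "(x, y) \<notin> prec P" using ac ab by simp
    qed
    ultimately have "card (g ` A) \<le> k" using wd unfolding width_le_def by blast
    moreover have "card (g ` A) = card A" using inj A by (meson card_image inj_on_subset)
    ultimately show "card A \<le> k" by simp
  qed
qed

lemma width_conc_of:
  assumes "width_le k P" "A \<subseteq> ev P" "\<forall>x\<in>A. \<forall>y\<in>A. (x, y) \<notin> prec P"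
  shows "width_le k (conc_of P A)" "card A \<le> k"
  using assms unfolding width_le_def by (auto simp: subset_iff)

lemma iiPoms_iff: "X \<in> iiPoms k \<longleftrightarrow> (\<exists>P. wf_ipom P \<and> width_le k P \<and> X = cls P)"
  unfolding iiPoms_def by blast

lemma iiPoms_rep:
  assumes "X \<in> iiPoms k"
  shows "wf_ipom (rep X)" "width_le k (rep X)" "cls (rep X) = X"
proof -
  obtain P where P: "wf_ipom P" "width_le k P" "X = cls P" using assms iiPoms_iff by blast
  have r: "wf_ipom (rep (cls P))" "ipom_iso P (rep (cls P))" using rep_cls[OF P(1)] by blast+
  show "wf_ipom (rep X)" using r P by simp
  show "cls (rep X) = X" using cls_rep[OF P(1)] P by simp
  show "width_le k (rep X)" using width_iso[OF P(2) iso_sym[OF P(1) r(2)]] P by simp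
qed

lemma iiPomsI: "wf_ipom P \<Longrightarrow> width_le k P \<Longrightarrow> cls P \<in> iiPoms k"
  unfolding iiPoms_def by blast

lemma Sc_Tc: "Sc (Tc P) = Tc P"
  unfolding Sc_def Tc_def conc_of_def by auto

lemma Tc_Tc: "Tc (Tc P) = Tc P"
  unfolding Tc_def conc_of_def by auto

lemma pomT_props:
  assumes X: "X \<in> iiPoms k"
  shows "pomT X \<in> iiPoms k" "pomS (pomT X) = pomT X" "pomT (pomT X) = pomT X"
    "pomT X \<in> iiObj k" "pomS X \<in> iiObj k"
proof -
  let ?P = "rep X"
  have w: "wf_ipom ?P" and wd: "width_le k ?P" and c: "cls ?P = X" using iiPoms_rep[OF X] by auto
  have pt: "pomT X = cls (Tc ?P)" using pomT_cls[OF w] c by simp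
  have ps: "pomS X = cls (Sc ?P)" using pomS_cls[OF w] c by simp
  have wt: "wf_ipom (Tc ?P)" using wf_Tc[OF w] .
  have wd2: "width_le k (Tc ?P)" "card (tgtI ?P) \<le> k"
    unfolding Tc_def using width_conc_of[OF wd wf_tgt[OF w] tgt_ac[OF w]] by auto
  have wd3: "card (srcI ?P) \<le> k"
    using width_conc_of[OF wd wf_src[OF w] src_ac[OF w]] by auto
  show "pomT X \<in> iiPoms k" using pt iiPomsI[OF wt wd2(1)] by simp
  show "pomS (pomT X) = pomT X" using pt pomS_cls[OF wt] unfolding Sc_Tc by simp
  show "pomT (pomT X) = pomT X" using pt pomT_cls[OF wt] unfolding Tc_Tc by simp
  show "pomT X \<in> iiObj k" unfolding iiObj_def using pt wt wd2(2)
    by (auto simp: Tc_def is_conc_def)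
  show "pomS X \<in> iiObj k" unfolding iiObj_def using ps wf_Sc[OF w] wd3
    by (auto simp: Sc_def is_conc_def)
qed


lemma trancl_map_inj:
  assumes inj: "inj_on f S" and sub: "r \<subseteq> S \<times> S"
    and xy: "(x, y) \<in> (map_prod f f ` r)\<^sup>+"
  shows "\<exists>a b. x = f a \<and> y = f b \<and> a \<in> S \<and> b \<in> S \<and> (a, b) \<in> r\<^sup>+"
  using xy
proof (induction rule: trancl_induct)
  case (base y)
  then obtain a b where "(a, b) \<in> r" "x = f a" "y = f b" by auto
  then show ?case using sub by blast
next
  case (step y z)
  then obtain a b where ab: "x = f a" "y = f b" "a \<in> S" "b \<in> S" "(a, b) \<in> r\<^sup>+" by blast
  obtain c d where cd: "(c, d) \<in> r" "y = f c" "z = f d" using step(2) by auto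
  have "c \<in> S" "d \<in> S" using cd sub by auto
  then have "c = b" using inj ab cd inj_on_def by metis
  have "(a, d) \<in> r\<^sup>+" using ab(5) cd(1) \<open>c = b\<close> by (meson trancl_into_trancl)
  show ?case using ab \<open>x = f a\<close> cd(3) \<open>d \<in> S\<close> \<open>(a, d) \<in> r\<^sup>+\<close> by blast
qed

lemma acyclic_map_inj:
  assumes inj: "inj_on f S" and sub: "r \<subseteq> S \<times> S" and ac: "acyclic r"
  shows "acyclic (map_prod f f ` r)"
  unfolding acyclic_def
proof (intro allI notI)
  fix x assume "(x, x) \<in> (map_prod f f ` r)\<^sup>+"
  then obtain a b where "x = f a" "x = f b" "a \<in> S" "b \<in> S" "(a, b) \<in> r\<^sup>+"
    using trancl_map_inj[OF inj sub] by blast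
  then have "a = b" using inj inj_on_def by metis
  then show False using \<open>(a, b) \<in> r\<^sup>+\<close> ac unfolding acyclic_def by blast
qed

lemma acyclic_union_glue:
  assumes acA: "acyclic rA" and acB: "acyclic rB"
    and subA: "rA \<subseteq> EA \<times> EA" and subB: "rB \<subseteq> EB \<times> EB"
    and ag: "\<And>c d. c \<in> EA \<inter> EB \<Longrightarrow> d \<in> EA \<inter> EB \<Longrightarrow> (c, d) \<in> rA \<longleftrightarrow> (c, d) \<in> rB"
    and tot: "\<And>c d. c \<in> EA \<inter> EB \<Longrightarrow> d \<in> EA \<inter> EB \<Longrightarrow> c \<noteq> d \<Longrightarrow> (c, d) \<in> rA \<or> (d, c) \<in> rA"
  shows "acyclic (rA \<union> rB)"
proof -
  have trA: "rA\<^sup>+ \<subseteq> EA \<times> EA" using subA by (simp add: trancl_subset_Sigma)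
  have trB: "rB\<^sup>+ \<subseteq> EB \<times> EB" using subB by (simp add: trancl_subset_Sigma)
  have CA: "(c, d) \<in> rA \<and> (c, d) \<in> rB"
    if c: "c \<in> EA \<inter> EB" and d: "d \<in> EA \<inter> EB" and cd: "(c, d) \<in> rA\<^sup>+ \<or> (c, d) \<in> rB\<^sup>+" for c d
  proof -
    have "c \<noteq> d" using cd acA acB unfolding acyclic_def by blast
    then consider "(c, d) \<in> rA" | "(d, c) \<in> rA" using tot c d by blast
    then show ?thesis
    proof cases
      case 1 then show ?thesis using ag c d by blast
    next
      case 2
      then have "(d, c) \<in> rB" using ag c d by blast
      then have "(c, c) \<in> rA\<^sup>+ \<or> (c, c) \<in> rB\<^sup>+" using cd 2
        by (meson trancl_into_trancl)
      then show ?thesis using acA acB unfolding acyclic_def by blast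
    qed
  qed
  define I where "I x z \<longleftrightarrow> (x, z) \<in> rA\<^sup>+ \<or> (x, z) \<in> rB\<^sup>+ \<or>
      (\<exists>c. (x, c) \<in> rA\<^sup>+ \<and> (c, z) \<in> rB\<^sup>+) \<or> (\<exists>c. (x, c) \<in> rB\<^sup>+ \<and> (c, z) \<in> rA\<^sup>+)" for x z
  have inv: "I x z" if "(x, z) \<in> (rA \<union> rB)\<^sup>+" for x z
    using that
  proof (induction rule: trancl_induct)
    case (base y)
    then show ?case unfolding I_def by blast
  next
    case (step y z)
    from step(2) consider (SA) "(y, z) \<in> rA" | (SB) "(y, z) \<in> rB" by blast
    then show ?case
    proof cases
      case SA
      have yA: "y \<in> EA" using SA subA by blast
      from step(3) consider "(x, y) \<in> rA\<^sup>+" | "(x, y) \<in> rB\<^sup>+"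
        | c where "(x, c) \<in> rA\<^sup>+" "(c, y) \<in> rB\<^sup>+" | c where "(x, c) \<in> rB\<^sup>+" "(c, y) \<in> rA\<^sup>+"
        unfolding I_def by blast
      then show ?thesis
      proof cases
        case 1
        then show ?thesis unfolding I_def using SA by (meson trancl_into_trancl)
      next
        case 2
        then show ?thesis unfolding I_def using SA by blast
      next
        case (3 c)
        have "c \<in> EA" "c \<in> EB" "y \<in> EB" using 3 trA trB by blast+
        then have "(c, y) \<in> rA" using CA[of c y] 3 yA by blast
        then have "(x, z) \<in> rA\<^sup>+" using 3 SA by (meson trancl_into_trancl)
        then show ?thesis unfolding I_def by blast
      next
        case (4 c)
        then show ?thesis unfolding I_def using SA by (meson trancl_into_trancl)
      qed
    next
      case SB
      have yB: "y \<in> EB" using SB subB by blast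
      from step(3) consider "(x, y) \<in> rA\<^sup>+" | "(x, y) \<in> rB\<^sup>+"
        | c where "(x, c) \<in> rA\<^sup>+" "(c, y) \<in> rB\<^sup>+" | c where "(x, c) \<in> rB\<^sup>+" "(c, y) \<in> rA\<^sup>+"
        unfolding I_def by blast
      then show ?thesis
      proof cases
        case 1
        then show ?thesis unfolding I_def using SB by blast
      next
        case 2
        then show ?thesis unfolding I_def using SB by (meson trancl_into_trancl)
      next
        case (3 c)
        then show ?thesis unfolding I_def using SB by (meson trancl_into_trancl)
      next
        case (4 c)
        have "c \<in> EA" "c \<in> EB" "y \<in> EA" using 4 trA trB by blast+
        then have "(c, y) \<in> rB" using CA[of c y] 4 yB by blast
        then have "(x, z) \<in> rB\<^sup>+" using 4 SB by (meson trancl_into_trancl)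
        then show ?thesis unfolding I_def by blast
      qed
    qed
  qed
  show ?thesis unfolding acyclic_def
  proof (intro allI notI)
    fix x assume "(x, x) \<in> (rA \<union> rB)\<^sup>+"
    then have "I x x" by (rule inv)
    then consider "(x, x) \<in> rA\<^sup>+" | "(x, x) \<in> rB\<^sup>+"
      | c where "(x, c) \<in> rA\<^sup>+" "(c, x) \<in> rB\<^sup>+" | c where "(x, c) \<in> rB\<^sup>+" "(c, x) \<in> rA\<^sup>+"
      unfolding I_def by blast
    then show False
    proof cases
      case 1 then show ?thesis using acA unfolding acyclic_def by blast
    next
      case 2 then show ?thesis using acB unfolding acyclic_def by blast
    next
      case (3 c)
      have "c \<in> EA" "c \<in> EB" "x \<in> EA" "x \<in> EB" using 3 trA trB by blast+
      then have "(c, x) \<in> rA" using CA[of c x] 3 by blast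
      then have "(x, x) \<in> rA\<^sup>+" using 3 by (meson trancl_into_trancl)
      then show ?thesis using acA unfolding acyclic_def by blast
    next
      case (4 c)
      have "c \<in> EA" "c \<in> EB" "x \<in> EA" "x \<in> EB" using 4 trA trB by blast+
      then have "(c, x) \<in> rB" using CA[of c x] 4 by blast
      then have "(x, x) \<in> rB\<^sup>+" using 4 by (meson trancl_into_trancl)
      then show ?thesis using acB unfolding acyclic_def by blast
    qed
  qed
qed


definition glueW :: "'a ipom \<Rightarrow> 'a ipom \<Rightarrow> 'a ipom \<Rightarrow> (nat \<Rightarrow> nat) \<Rightarrow> (nat \<Rightarrow> nat) \<Rightarrow> bool" where
  "glueW P Q R f g \<longleftrightarrow> inj_on f (ev P) \<and> inj_on g (ev Q) \<and>
     ev R = f ` ev P \<union> g ` ev Q \<and>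
     f ` ev P \<inter> g ` ev Q = f ` tgtI P \<and> g ` srcI Q = f ` tgtI P \<and>
     (\<forall>x\<in>tgtI P. \<forall>x'\<in>tgtI P. \<forall>y\<in>srcI Q. \<forall>y'\<in>srcI Q.
        f x = g y \<longrightarrow> f x' = g y' \<longrightarrow> ((x, x') \<in> evo P \<longleftrightarrow> (y, y') \<in> evo Q)) \<and>
     prec R = map_prod f f ` prec P \<union> map_prod g g ` prec Q \<union>
              (f ` (ev P - tgtI P)) \<times> (g ` (ev Q - srcI Q)) \<and>
     evo R = map_prod f f ` evo P \<union> map_prod g g ` evo Q \<and>
     (\<forall>x\<in>ev P. lab R (f x) = lab P x) \<and> (\<forall>y\<in>ev Q. lab R (g y) = lab Q y) \<and>
     srcI R = f ` srcI P \<and> tgtI R = g ` tgtI Q"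

lemma is_glue_W: "is_glue P Q R \<longleftrightarrow> (\<exists>f g. glueW P Q R f g)"
  unfolding is_glue_def glueW_def by (rule refl)

locale glu =
  fixes P Q R :: "'a ipom" and f g :: "nat \<Rightarrow> nat"
  assumes wP: "wf_ipom P" and wQ: "wf_ipom Q" and G: "glueW P Q R f g"
begin

lemmas finj = G[unfolded glueW_def, THEN conjunct1]
lemmas ginj = G[unfolded glueW_def, THEN conjunct2, THEN conjunct1]
lemmas evR = G[unfolded glueW_def, THEN conjunct2, THEN conjunct2, THEN conjunct1]
lemmas ovlset = G[unfolded glueW_def, THEN conjunct2, THEN conjunct2, THEN conjunct2, THEN conjunct1]
lemmas gS = G[unfolded glueW_def, THEN conjunct2, THEN conjunct2, THEN conjunct2, THEN conjunct2, THEN conjunct1]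
lemmas agree0 = G[unfolded glueW_def, THEN conjunct2, THEN conjunct2, THEN conjunct2, THEN conjunct2, THEN conjunct2, THEN conjunct1]
lemmas precR = G[unfolded glueW_def, THEN conjunct2, THEN conjunct2, THEN conjunct2, THEN conjunct2, THEN conjunct2, THEN conjunct2, THEN conjunct1]
lemmas evoR = G[unfolded glueW_def, THEN conjunct2, THEN conjunct2, THEN conjunct2, THEN conjunct2, THEN conjunct2, THEN conjunct2, THEN conjunct2, THEN conjunct1]
lemmas labf0 = G[unfolded glueW_def, THEN conjunct2, THEN conjunct2, THEN conjunct2, THEN conjunct2, THEN conjunct2, THEN conjunct2, THEN conjunct2, THEN conjunct2, THEN conjunct1]
lemmas labg0 = G[unfolded glueW_def, THEN conjunct2, THEN conjunct2, THEN conjunct2, THEN conjunct2, THEN conjunct2, THEN conjunct2, THEN conjunct2, THEN conjunct2, THEN conjunct2, THEN conjunct1]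
lemmas srcR = G[unfolded glueW_def, THEN conjunct2, THEN conjunct2, THEN conjunct2, THEN conjunct2, THEN conjunct2, THEN conjunct2, THEN conjunct2, THEN conjunct2, THEN conjunct2, THEN conjunct2, THEN conjunct1]
lemmas tgtR = G[unfolded glueW_def, THEN conjunct2, THEN conjunct2, THEN conjunct2, THEN conjunct2, THEN conjunct2, THEN conjunct2, THEN conjunct2, THEN conjunct2, THEN conjunct2, THEN conjunct2, THEN conjunct2]
lemma labf: "x \<in> ev P \<Longrightarrow> lab R (f x) = lab P x" using labf0 by blast
lemma labg: "y \<in> ev Q \<Longrightarrow> lab R (g y) = lab Q y" using labg0 by blast

lemma agree: "x \<in> tgtI P \<Longrightarrow> x' \<in> tgtI P \<Longrightarrow> y \<in> srcI Q \<Longrightarrow> y' \<in> srcI Q \<Longrightarrow>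
   f x = g y \<Longrightarrow> f x' = g y' \<Longrightarrow> (x, x') \<in> evo P \<longleftrightarrow> (y, y') \<in> evo Q"
  using agree0 by blast

lemma feq: "a \<in> ev P \<Longrightarrow> b \<in> ev P \<Longrightarrow> f a = f b \<longleftrightarrow> a = b"
  using finj inj_on_def by metis
lemma geq: "a \<in> ev Q \<Longrightarrow> b \<in> ev Q \<Longrightarrow> g a = g b \<longleftrightarrow> a = b"
  using ginj inj_on_def by metis

lemma ovl:
  assumes a: "a \<in> ev P" and b: "b \<in> ev Q" and e: "f a = g b"
  shows "a \<in> tgtI P" "b \<in> srcI Q"
proof -
  have "f a \<in> f ` tgtI P" using ovlset a b e by blast
  then obtain a' where a': "a' \<in> tgtI P" "f a = f a'" by blast
  then show "a \<in> tgtI P" using feq[OF a] wf_tgt[OF wP] by blast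
  have "g b \<in> g ` srcI Q" using gS \<open>f a \<in> f ` tgtI P\<close> e by simp
  then obtain b' where b': "b' \<in> srcI Q" "g b = g b'" by blast
  then show "b \<in> srcI Q" using geq[OF b] wf_src[OF wQ] by blast
qed

lemma matchT: "a \<in> tgtI P \<Longrightarrow> \<exists>b\<in>srcI Q. f a = g b"
  using gS by (metis imageE imageI)
lemma matchS: "b \<in> srcI Q \<Longrightarrow> \<exists>a\<in>tgtI P. g b = f a"
  using gS by (metis imageE imageI)

lemma fin: "a \<in> ev P \<Longrightarrow> f a \<in> ev R" using evR by blast
lemma gin: "b \<in> ev Q \<Longrightarrow> g b \<in> ev R" using evR by blast

lemma evR_cases:
  assumes "u \<in> ev R"
  obtains (F) a where "a \<in> ev P" "u = f a" | (G) b where "b \<in> ev Q" "u = g b"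
  using assms evR by blast

lemma prec_cases:
  assumes "(u, v) \<in> prec R"
  obtains (FF) a b where "(a, b) \<in> prec P" "u = f a" "v = f b"
    | (GG) a b where "(a, b) \<in> prec Q" "u = g a" "v = g b"
    | (FG) a b where "a \<in> ev P" "a \<notin> tgtI P" "b \<in> ev Q" "b \<notin> srcI Q" "u = f a" "v = g b"
  using assms unfolding precR by blast

lemma evo_cases:
  assumes "(u, v) \<in> evo R"
  obtains (FF) a b where "(a, b) \<in> evo P" "u = f a" "v = f b"
    | (GG) a b where "(a, b) \<in> evo Q" "u = g a" "v = g b"
  using assms unfolding evoR by blast

lemma prec_ffI: "(a, b) \<in> prec P \<Longrightarrow> (f a, f b) \<in> prec R"
  unfolding precR by blast
lemma prec_ggI: "(a, b) \<in> prec Q \<Longrightarrow> (g a, g b) \<in> prec R"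
  unfolding precR by blast
lemma prec_fgI: "a \<in> ev P \<Longrightarrow> a \<notin> tgtI P \<Longrightarrow> b \<in> ev Q \<Longrightarrow> b \<notin> srcI Q \<Longrightarrow> (f a, g b) \<in> prec R"
  unfolding precR by blast
lemma evo_ffI: "(a, b) \<in> evo P \<Longrightarrow> (f a, f b) \<in> evo R"
  unfolding evoR by blast
lemma evo_ggI: "(a, b) \<in> evo Q \<Longrightarrow> (g a, g b) \<in> evo R"
  unfolding evoR by blast

lemma pP: "(a, b) \<in> prec P \<Longrightarrow> a \<in> ev P \<and> b \<in> ev P" using wf_precD[OF wP] .
lemma pQ: "(a, b) \<in> prec Q \<Longrightarrow> a \<in> ev Q \<and> b \<in> ev Q" using wf_precD[OF wQ] .
lemma eP: "(a, b) \<in> evo P \<Longrightarrow> a \<in> ev P \<and> b \<in> ev P" using wf_evoD[OF wP] .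
lemma eQ: "(a, b) \<in> evo Q \<Longrightarrow> a \<in> ev Q \<and> b \<in> ev Q" using wf_evoD[OF wQ] .

lemma prec_ffD:
  assumes a: "a \<in> ev P" and b: "b \<in> ev P" and r: "(f a, f b) \<in> prec R"
  shows "(a, b) \<in> prec P"
  using r
proof (cases rule: prec_cases)
  case (FF c d)
  then show ?thesis using feq a b pP by metis
next
  case (GG c d)
  then have "d \<in> srcI Q" using ovl[OF b] pQ by metis
  then show ?thesis using GG wf_srcmin[OF wQ] by blast
next
  case (FG c d)
  then show ?thesis using ovl[OF b] by metis
qed

lemma prec_ggD:
  assumes a: "a \<in> ev Q" and b: "b \<in> ev Q" and r: "(g a, g b) \<in> prec R"
  shows "(a, b) \<in> prec Q"
  using r
proof (cases rule: prec_cases)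
  case (FF c d)
  then have "c \<in> tgtI P" using ovl[OF _ a] pP by metis
  then show ?thesis using FF wf_tgtmax[OF wP] by blast
next
  case (GG c d)
  then show ?thesis using geq a b pQ by metis
next
  case (FG c d)
  then show ?thesis using ovl[OF _ a] by metis
qed

lemma evo_ffD:
  assumes a: "a \<in> ev P" and b: "b \<in> ev P" and r: "(f a, f b) \<in> evo R"
  shows "(a, b) \<in> evo P"
  using r
proof (cases rule: evo_cases)
  case (FF c d)
  then show ?thesis using feq a b eP by metis
next
  case (GG c d)
  have c: "c \<in> ev Q" "d \<in> ev Q" using GG eQ by auto
  have "a \<in> tgtI P" "c \<in> srcI Q" using ovl[OF a c(1)] GG by auto
  moreover have "b \<in> tgtI P" "d \<in> srcI Q" using ovl[OF b c(2)] GG by auto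
  ultimately show ?thesis using agree GG by metis
qed

lemma evo_ggD:
  assumes a: "a \<in> ev Q" and b: "b \<in> ev Q" and r: "(g a, g b) \<in> evo R"
  shows "(a, b) \<in> evo Q"
  using r
proof (cases rule: evo_cases)
  case (FF c d)
  have c: "c \<in> ev P" "d \<in> ev P" using FF eP by auto
  have "c \<in> tgtI P" "a \<in> srcI Q" using ovl[OF c(1) a] FF by auto
  moreover have "d \<in> tgtI P" "b \<in> srcI Q" using ovl[OF c(2) b] FF by auto
  ultimately show ?thesis using agree FF by metis
next
  case (GG c d)
  then show ?thesis using geq a b eQ by metis
qed

end


context glu begin

lemma prec_sub: "(u, v) \<in> prec R \<Longrightarrow> u \<in> ev R \<and> v \<in> ev R"
  by (erule prec_cases) (auto dest: pP pQ intro: fin gin)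

lemma evo_sub: "(u, v) \<in> evo R \<Longrightarrow> u \<in> ev R \<and> v \<in> ev R"
  by (erule evo_cases) (auto dest: eP eQ intro: fin gin)

lemma prec_irr: "(u, u) \<notin> prec R"
proof
  assume "(u, u) \<in> prec R"
  then show False
  proof (cases rule: prec_cases)
    case (FF a b)
    then have "a = b" using feq pP by metis
    then show False using FF wf_irr[OF wP] by simp
  next
    case (GG a b)
    then have "a = b" using geq pQ by metis
    then show False using GG wf_irr[OF wQ] by simp
  next
    case (FG a b)
    then show False using ovl by metis
  qed
qed

lemma prec_trans:
  assumes uv: "(u, v) \<in> prec R" and vw: "(v, w) \<in> prec R"
  shows "(u, w) \<in> prec R"
  using uv
proof (cases rule: prec_cases)
  case (FF a b)
  have ab: "a \<in> ev P" "b \<in> ev P" "a \<notin> tgtI P" using FF pP wf_tgtmax[OF wP] by auto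
  from vw show ?thesis
  proof (cases rule: prec_cases)
    case (FF c d)
    have "c = b" using FF \<open>v = f b\<close> feq pP ab by metis
    then show ?thesis using FF \<open>(a, b) \<in> prec P\<close> \<open>u = f a\<close> wf_trans[OF wP] prec_ffI by metis
  next
    case (GG c d)
    have "d \<notin> srcI Q" "d \<in> ev Q" using GG wf_srcmin[OF wQ] pQ by auto
    then show ?thesis using prec_fgI[OF ab(1) ab(3)] GG \<open>u = f a\<close> by simp
  next
    case (FG c d)
    then show ?thesis using prec_fgI[OF ab(1) ab(3)] \<open>u = f a\<close> by simp
  qed
next
  case (GG a b)
  have ab: "a \<in> ev Q" "b \<in> ev Q" "b \<notin> srcI Q" using GG pQ wf_srcmin[OF wQ] by auto
  from vw show ?thesis
  proof (cases rule: prec_cases)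
    case (FF c d)
    then show ?thesis using ovl(2)[OF _ ab(2)] ab(3) pP GG by metis
  next
    case (GG c d)
    have "c = b" using GG \<open>v = g b\<close> geq pQ ab by metis
    then show ?thesis using GG \<open>(a, b) \<in> prec Q\<close> \<open>u = g a\<close> wf_trans[OF wQ] prec_ggI by metis
  next
    case (FG c d)
    then show ?thesis using ovl(1)[OF _ ab(2)] GG by metis
  qed
next
  case (FG a b)
  from vw show ?thesis
  proof (cases rule: prec_cases)
    case (FF c d)
    then show ?thesis using ovl(2)[of c b] FG pP by metis
  next
    case (GG c d)
    have "c = b" using GG FG geq pQ by metis
    have "d \<notin> srcI Q" "d \<in> ev Q" using GG wf_srcmin[OF wQ] pQ by auto
    then show ?thesis using prec_fgI FG GG by metis
  next
    case (FG c d)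
    then show ?thesis using ovl(1)[of c b] \<open>b \<in> ev Q\<close> \<open>v = g b\<close> by metis
  qed
qed

lemma prec_ivl:
  assumes wx: "(w, x) \<in> prec R" and yz: "(y, z) \<in> prec R"
  shows "(w, z) \<in> prec R \<or> (y, x) \<in> prec R"
  using wx
proof (cases rule: prec_cases)
  case (FF a b)
  have ab: "a \<in> ev P" "a \<notin> tgtI P" using FF pP wf_tgtmax[OF wP] by auto
  from yz show ?thesis
  proof (cases rule: prec_cases)
    case (FF c d)
    then show ?thesis using \<open>(a, b) \<in> prec P\<close> \<open>w = f a\<close> \<open>x = f b\<close> wf_ivl[OF wP] prec_ffI by metis
  next
    case (GG c d)
    have "d \<notin> srcI Q" "d \<in> ev Q" using GG wf_srcmin[OF wQ] pQ by auto
    then show ?thesis using prec_fgI[OF ab] GG \<open>w = f a\<close> by simp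
  next
    case (FG c d)
    then show ?thesis using prec_fgI[OF ab] \<open>w = f a\<close> by simp
  qed
next
  case (GG a b)
  have ab: "b \<in> ev Q" "b \<notin> srcI Q" using GG pQ wf_srcmin[OF wQ] by auto
  from yz show ?thesis
  proof (cases rule: prec_cases)
    case (FF c d)
    have "c \<notin> tgtI P" "c \<in> ev P" using FF wf_tgtmax[OF wP] pP by auto
    then show ?thesis using prec_fgI ab GG FF by metis
  next
    case (GG c d)
    then show ?thesis using \<open>(a, b) \<in> prec Q\<close> \<open>w = g a\<close> \<open>x = g b\<close> wf_ivl[OF wQ] prec_ggI by metis
  next
    case (FG c d)
    then show ?thesis using prec_fgI ab GG by metis
  qed
next
  case (FG a b)
  from yz show ?thesis
  proof (cases rule: prec_cases)
    case (FF c d)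
    have "c \<notin> tgtI P" "c \<in> ev P" using FF wf_tgtmax[OF wP] pP by auto
    then show ?thesis using prec_fgI FG FF by metis
  next
    case (GG c d)
    have "d \<notin> srcI Q" "d \<in> ev Q" using GG wf_srcmin[OF wQ] pQ by auto
    then show ?thesis using prec_fgI FG GG by metis
  next
    case (FG c d)
    then show ?thesis using prec_fgI \<open>a \<in> ev P\<close> \<open>a \<notin> tgtI P\<close> \<open>w = f a\<close> by metis
  qed
qed

lemma evo_np:
  assumes uv: "(u, v) \<in> evo R"
  shows "(u, v) \<notin> prec R \<and> (v, u) \<notin> prec R"
  using uv
proof (cases rule: evo_cases)
  case (FF a b)
  have ab: "a \<in> ev P" "b \<in> ev P" using FF eP by auto
  have "(a, b) \<notin> prec P" "(b, a) \<notin> prec P" using wf_evo_np[OF wP FF(1)] by auto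
  then show ?thesis using prec_ffD ab FF by metis
next
  case (GG a b)
  have ab: "a \<in> ev Q" "b \<in> ev Q" using GG eQ by auto
  have "(a, b) \<notin> prec Q" "(b, a) \<notin> prec Q" using wf_evo_np[OF wQ GG(1)] by auto
  then show ?thesis using prec_ggD ab GG by metis
qed

lemma total:
  assumes u: "u \<in> ev R" and v: "v \<in> ev R" and ne: "u \<noteq> v"
  shows "(u, v) \<in> prec R \<or> (v, u) \<in> prec R \<or> (u, v) \<in> evo R \<or> (v, u) \<in> evo R"
proof -
  have ffc: ?thesis if "a \<in> ev P" "b \<in> ev P" "u = f a" "v = f b" for a b
  proof -
    have "a \<noteq> b" using that ne by auto
    then show ?thesis using wf_total[OF wP that(1,2)] that prec_ffI evo_ffI by metis
  qed
  have ggc: ?thesis if "a \<in> ev Q" "b \<in> ev Q" "u = g a" "v = g b" for a b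
  proof -
    have "a \<noteq> b" using that ne by auto
    then show ?thesis using wf_total[OF wQ that(1,2)] that prec_ggI evo_ggI by metis
  qed
  have fgc: ?thesis if a: "a \<in> ev P" and b: "b \<in> ev Q" and e: "u = f a" "v = g b" for a b
  proof (cases "a \<in> tgtI P")
    case True
    then obtain a' where "a' \<in> srcI Q" "f a = g a'" using matchT by blast
    then show ?thesis using ggc[of a' b] b e wf_src[OF wQ] by auto
  next
    case aT: False
    show ?thesis
    proof (cases "b \<in> srcI Q")
      case True
      then obtain b' where "b' \<in> tgtI P" "g b = f b'" using matchS by blast
      then show ?thesis using ffc[of a b'] a e wf_tgt[OF wP] by auto
    next
      case False
      then show ?thesis using prec_fgI[OF a aT b] e by simp
    qed
  qed
  from u show ?thesis
  proof (cases rule: evR_cases)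
    case (F a)
    from v show ?thesis
    proof (cases rule: evR_cases)
      case (F b) then show ?thesis using ffc \<open>a \<in> ev P\<close> \<open>u = f a\<close> by blast
    next
      case (G b) then show ?thesis using fgc \<open>a \<in> ev P\<close> \<open>u = f a\<close> by blast
    qed
  next
    case (G a)
    from v show ?thesis
    proof (cases rule: evR_cases)
      case (F b)
      have "(v, u) \<in> prec R \<or> (u, v) \<in> prec R \<or> (v, u) \<in> evo R \<or> (u, v) \<in> evo R"
      proof (cases "b \<in> tgtI P")
        case True
        then obtain b' where "b' \<in> srcI Q" "f b = g b'" using matchT by blast
        then show ?thesis using ggc[of a b'] G F wf_src[OF wQ] by auto
      next
        case bT: False
        show ?thesis
        proof (cases "a \<in> srcI Q")
          case True
          then obtain a' where "a' \<in> tgtI P" "g a = f a'" using matchS by blast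
          then show ?thesis using ffc[of a' b] G F wf_tgt[OF wP] by auto
        next
          case False
          then show ?thesis using prec_fgI[OF F(1) bT G(1)] G F by simp
        qed
      qed
      then show ?thesis by blast
    next
      case (G b) then show ?thesis using ggc \<open>a \<in> ev Q\<close> \<open>u = g a\<close> by blast
    qed
  qed
qed

lemma src_min: "x \<in> srcI R \<Longrightarrow> (y, x) \<notin> prec R"
proof
  assume x: "x \<in> srcI R" and yx: "(y, x) \<in> prec R"
  obtain a where a: "a \<in> srcI P" "x = f a" using x srcR by blast
  have aP: "a \<in> ev P" using a wf_src[OF wP] by blast
  from yx show False
  proof (cases rule: prec_cases)
    case (FF c d)
    have "d = a" using FF a aP feq pP by metis
    then show False using FF a wf_srcmin[OF wP] by blast
  next
    case (GG c d)
    have "d \<in> srcI Q" using ovl(2)[OF aP] GG a pQ by metis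
    then show False using GG wf_srcmin[OF wQ] by blast
  next
    case (FG c d)
    then show False using ovl(2)[OF aP] a by metis
  qed
qed

lemma tgt_max: "x \<in> tgtI R \<Longrightarrow> (x, y) \<notin> prec R"
proof
  assume x: "x \<in> tgtI R" and xy: "(x, y) \<in> prec R"
  obtain b where b: "b \<in> tgtI Q" "x = g b" using x tgtR by blast
  have bQ: "b \<in> ev Q" using b wf_tgt[OF wQ] by blast
  from xy show False
  proof (cases rule: prec_cases)
    case (FF c d)
    have "c \<in> tgtI P" using ovl(1)[OF _ bQ] FF b pP by metis
    then show False using FF wf_tgtmax[OF wP] by blast
  next
    case (GG c d)
    have "c = b" using GG b bQ geq pQ by metis
    then show False using GG b wf_tgtmax[OF wQ] by blast
  next
    case (FG c d)
    then show False using ovl(1)[OF _ bQ] b by metis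
  qed
qed

lemma evo_acyc: "acyclic (evo R)"
proof -
  let ?rA = "map_prod f f ` evo P" and ?rB = "map_prod g g ` evo Q"
  have subP: "evo P \<subseteq> ev P \<times> ev P" using eP by auto
  have subQ: "evo Q \<subseteq> ev Q \<times> ev Q" using eQ by auto
  have acA: "acyclic ?rA" by (rule acyclic_map_inj[OF finj subP wf_acyc[OF wP]])
  have acB: "acyclic ?rB" by (rule acyclic_map_inj[OF ginj subQ wf_acyc[OF wQ]])
  have sA: "?rA \<subseteq> f ` ev P \<times> f ` ev P" using subP by auto
  have sB: "?rB \<subseteq> g ` ev Q \<times> g ` ev Q" using subQ by auto
  have Cc: "\<exists>x\<in>tgtI P. \<exists>y\<in>srcI Q. c = f x \<and> c = g y" if "c \<in> f ` ev P \<inter> g ` ev Q" for c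
  proof -
    have "c \<in> f ` tgtI P" using ovlset that by blast
    then obtain x where x: "x \<in> tgtI P" "c = f x" by blast
    obtain y where "y \<in> srcI Q" "f x = g y" using matchT[OF x(1)] by blast
    then show ?thesis using x by blast
  qed
  have inA: "(c, d) \<in> ?rA \<longleftrightarrow> (x, x') \<in> evo P"
    if "x \<in> ev P" "x' \<in> ev P" "c = f x" "d = f x'" for c d x x'
  proof
    assume "(c, d) \<in> ?rA"
    then have "(c, d) \<in> evo R" unfolding evoR by (rule UnI1)
    then have "(f x, f x') \<in> evo R" using that by simp
    then show "(x, x') \<in> evo P" using evo_ffD that by blast
  next
    assume "(x, x') \<in> evo P"
    then show "(c, d) \<in> ?rA" using that image_eqI[of "(c, d)" "map_prod f f" "(x, x')" "evo P"] by simp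
  qed
  have inB: "(c, d) \<in> ?rB \<longleftrightarrow> (y, y') \<in> evo Q"
    if "y \<in> ev Q" "y' \<in> ev Q" "c = g y" "d = g y'" for c d y y'
  proof
    assume "(c, d) \<in> ?rB"
    then have "(c, d) \<in> evo R" unfolding evoR by (rule UnI2)
    then have "(g y, g y') \<in> evo R" using that by simp
    then show "(y, y') \<in> evo Q" using evo_ggD that by blast
  next
    assume "(y, y') \<in> evo Q"
    then show "(c, d) \<in> ?rB" using that image_eqI[of "(c, d)" "map_prod g g" "(y, y')" "evo Q"] by simp
  qed
  have ag: "(c, d) \<in> ?rA \<longleftrightarrow> (c, d) \<in> ?rB"
    if cC: "c \<in> f ` ev P \<inter> g ` ev Q" and dC: "d \<in> f ` ev P \<inter> g ` ev Q" for c d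
  proof -
    obtain x y where xy: "x \<in> tgtI P" "y \<in> srcI Q" "c = f x" "c = g y" using Cc[OF cC] by blast
    obtain x' y' where xy': "x' \<in> tgtI P" "y' \<in> srcI Q" "d = f x'" "d = g y'" using Cc[OF dC] by blast
    have e: "x \<in> ev P" "x' \<in> ev P" "y \<in> ev Q" "y' \<in> ev Q"
      using xy xy' wf_tgt[OF wP] wf_src[OF wQ] by auto
    have 1: "(c, d) \<in> ?rA \<longleftrightarrow> (x, x') \<in> evo P" by (rule inA[OF e(1,2) xy(3) xy'(3)])
    have 2: "(c, d) \<in> ?rB \<longleftrightarrow> (y, y') \<in> evo Q" by (rule inB[OF e(3,4) xy(4) xy'(4)])
    have 3: "(x, x') \<in> evo P \<longleftrightarrow> (y, y') \<in> evo Q"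
      using agree[OF xy(1) xy'(1) xy(2) xy'(2)] xy xy' by simp
    show ?thesis using 1 2 3 by simp
  qed
  have tot: "(c, d) \<in> ?rA \<or> (d, c) \<in> ?rA"
    if cC: "c \<in> f ` ev P \<inter> g ` ev Q" and dC: "d \<in> f ` ev P \<inter> g ` ev Q" and ne: "c \<noteq> d" for c d
  proof -
    obtain x where x: "x \<in> tgtI P" "c = f x" using Cc[OF cC] by blast
    obtain x' where x': "x' \<in> tgtI P" "d = f x'" using Cc[OF dC] by blast
    have e: "x \<in> ev P" "x' \<in> ev P" using x x' wf_tgt[OF wP] by auto
    have "x \<noteq> x'" using ne x x' by auto
    moreover have "(x, x') \<notin> prec P" "(x', x) \<notin> prec P" using x x' wf_tgtmax[OF wP] by auto
    ultimately have "(x, x') \<in> evo P \<or> (x', x) \<in> evo P" using wf_total[OF wP e] by blast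
    then show ?thesis using inA[OF e(1,2) x(2) x'(2)] inA[OF e(2,1) x'(2) x(2)] by blast
  qed
  have "acyclic (?rA \<union> ?rB)"
    by (rule acyclic_union_glue[OF acA acB sA sB ag tot])
  then show ?thesis unfolding evoR .
qed

lemma wfR: "wf_ipom R"
proof -
  have a1: "finite (ev R)" using evR wf_fin[OF wP] wf_fin[OF wQ] by simp
  have a2: "prec R \<subseteq> ev R \<times> ev R" using prec_sub by auto
  have a3: "evo R \<subseteq> ev R \<times> ev R" using evo_sub by auto
  have a4: "trans (prec R)" using prec_trans by (meson transI)
  have a5: "srcI R \<subseteq> ev R" using srcR evR wf_src[OF wP] by auto
  have a6: "tgtI R \<subseteq> ev R" using tgtR evR wf_tgt[OF wQ] by auto
  have b1: "\<forall>x. (x, x) \<notin> prec R" using prec_irr by blast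
  have b2: "\<forall>w x y z. (w, x) \<in> prec R \<longrightarrow> (y, z) \<in> prec R \<longrightarrow>
                 (w, z) \<in> prec R \<or> (y, x) \<in> prec R" using prec_ivl by blast
  have b3: "\<forall>x y. (x, y) \<in> evo R \<longrightarrow> (x, y) \<notin> prec R \<and> (y, x) \<notin> prec R"
    using evo_np by blast
  have b4: "\<forall>x\<in>ev R. \<forall>y\<in>ev R. x \<noteq> y \<longrightarrow>
        (x, y) \<in> prec R \<or> (y, x) \<in> prec R \<or> (x, y) \<in> evo R \<or> (y, x) \<in> evo R"
    using total by blast
  have b5: "\<forall>x\<in>srcI R. \<forall>y. (y, x) \<notin> prec R" using src_min by blast
  have b6: "\<forall>x\<in>tgtI R. \<forall>y. (x, y) \<notin> prec R" using tgt_max by blast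
  show ?thesis unfolding wf_ipom_def
    using a1 a2 a3 a4 a5 a6 b1 b2 b3 b4 b5 b6 evo_acyc by (intro conjI) assumption+
qed


lemma iso_ScR: "ipom_iso (Sc P) (Sc R)"
proof -
  have sub: "srcI P \<subseteq> ev P" using wf_src[OF wP] .
  have b: "bij_betw f (srcI P) (srcI R)" unfolding srcR
    using inj_on_subset[OF finj sub] by (simp add: bij_betw_def)
  have e: "\<forall>x\<in>srcI P. \<forall>y\<in>srcI P. ((x, y) \<in> evo P \<inter> srcI P \<times> srcI P \<longleftrightarrow>
      (f x, f y) \<in> evo R \<inter> srcI R \<times> srcI R)"
  proof (intro ballI)
    fix x y assume xy: "x \<in> srcI P" "y \<in> srcI P"
    then have "x \<in> ev P" "y \<in> ev P" using sub by auto
    then show "((x, y) \<in> evo P \<inter> srcI P \<times> srcI P \<longleftrightarrow> (f x, f y) \<in> evo R \<inter> srcI R \<times> srcI R)"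
      using xy evo_ffI evo_ffD srcR by auto
  qed
  have l: "\<forall>x\<in>srcI P. lab R (f x) = lab P x" using labf sub by auto
  have "isoW (Sc P) (Sc R) f" unfolding isoW_def Sc_def conc_of_simps
    using b e l srcR by simp
  then show ?thesis using iso_W by blast
qed

lemma iso_TcR: "ipom_iso (Tc Q) (Tc R)"
proof -
  have sub: "tgtI Q \<subseteq> ev Q" using wf_tgt[OF wQ] .
  have b: "bij_betw g (tgtI Q) (tgtI R)" unfolding tgtR
    using inj_on_subset[OF ginj sub] by (simp add: bij_betw_def)
  have e: "\<forall>x\<in>tgtI Q. \<forall>y\<in>tgtI Q. ((x, y) \<in> evo Q \<inter> tgtI Q \<times> tgtI Q \<longleftrightarrow>
      (g x, g y) \<in> evo R \<inter> tgtI R \<times> tgtI R)"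
  proof (intro ballI)
    fix x y assume xy: "x \<in> tgtI Q" "y \<in> tgtI Q"
    then have "x \<in> ev Q" "y \<in> ev Q" using sub by auto
    then show "((x, y) \<in> evo Q \<inter> tgtI Q \<times> tgtI Q \<longleftrightarrow> (g x, g y) \<in> evo R \<inter> tgtI R \<times> tgtI R)"
      using xy evo_ggI evo_ggD tgtR by auto
  qed
  have l: "\<forall>x\<in>tgtI Q. lab R (g x) = lab Q x" using labg sub by auto
  have "isoW (Tc Q) (Tc R) g" unfolding isoW_def Tc_def conc_of_simps
    using b e l tgtR by simp
  then show ?thesis using iso_W by blast
qed

lemma widthR:
  assumes wdP: "width_le k P" and wdQ: "width_le k Q"
  shows "width_le k R"
  unfolding width_le_def
proof (intro allI impI)
  fix A assume A: "A \<subseteq> ev R" and ac: "\<forall>x\<in>A. \<forall>y\<in>A. (x, y) \<notin> prec R"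
  show "card A \<le> k"
  proof (cases "A \<subseteq> f ` ev P")
    case True
    define B where "B = {a \<in> ev P. f a \<in> A}"
    have AB: "A = f ` B" using True unfolding B_def by blast
    have "B \<subseteq> ev P" unfolding B_def by blast
    moreover have "\<forall>x\<in>B. \<forall>y\<in>B. (x, y) \<notin> prec P"
      using ac prec_ffI unfolding B_def by blast
    ultimately have "card B \<le> k" using wdP unfolding width_le_def by blast
    moreover have "card A = card B" unfolding AB
      using inj_on_subset[OF finj \<open>B \<subseteq> ev P\<close>] by (rule card_image)
    ultimately show ?thesis by simp
  next
    case nF: False
    show ?thesis
    proof (cases "A \<subseteq> g ` ev Q")
      case True
      define B where "B = {a \<in> ev Q. g a \<in> A}"
      have AB: "A = g ` B" using True unfolding B_def by blast
      have "B \<subseteq> ev Q" unfolding B_def by blast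
      moreover have "\<forall>x\<in>B. \<forall>y\<in>B. (x, y) \<notin> prec Q"
        using ac prec_ggI unfolding B_def by blast
      ultimately have "card B \<le> k" using wdQ unfolding width_le_def by blast
      moreover have "card A = card B" unfolding AB
        using inj_on_subset[OF ginj \<open>B \<subseteq> ev Q\<close>] by (rule card_image)
      ultimately show ?thesis by simp
    next
      case False
      obtain u where u: "u \<in> A" "u \<notin> g ` ev Q" using False by blast
      obtain v where v: "v \<in> A" "v \<notin> f ` ev P" using nF by blast
      obtain a where a: "a \<in> ev P" "u = f a" using u A evR by blast
      obtain b where b: "b \<in> ev Q" "v = g b" using v A evR by blast
      have "a \<notin> tgtI P" using a u matchT wf_src[OF wQ] by blast
      moreover have "b \<notin> srcI Q" using b v matchS wf_tgt[OF wP] by blast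
      ultimately have "(u, v) \<in> prec R" using prec_fgI a b by simp
      then show ?thesis using ac u v by blast
    qed
  qed
qed

end


lemma glue_exists:
  assumes wP: "wf_ipom P" and wQ: "wf_ipom Q" and i: "ipom_iso (Tc P) (Sc Q)"
  shows "\<exists>R f g. glueW P Q R f g"
proof -
  have par: "\<And>m n::nat. 2 * m \<noteq> 2 * n + 1" by presburger
  obtain h where h: "isoW (Tc P) (Sc Q) h" using i iso_W by blast
  have hb: "bij_betw h (tgtI P) (srcI Q)" using h unfolding isoW_def Tc_def Sc_def by simp
  have he: "\<forall>x\<in>tgtI P. \<forall>y\<in>tgtI P. ((x, y) \<in> evo P \<longleftrightarrow> (h x, h y) \<in> evo Q)"
  proof (intro ballI)
    fix x y assume xy: "x \<in> tgtI P" "y \<in> tgtI P"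
    have "h x \<in> srcI Q" "h y \<in> srcI Q" using hb xy bij_betw_apply by metis+
    moreover have "((x, y) \<in> evo P \<inter> tgtI P \<times> tgtI P \<longleftrightarrow> (h x, h y) \<in> evo Q \<inter> srcI Q \<times> srcI Q)"
      using h xy unfolding isoW_def Tc_def Sc_def conc_of_simps by blast
    ultimately show "((x, y) \<in> evo P \<longleftrightarrow> (h x, h y) \<in> evo Q)" using xy by blast
  qed
  have hl: "\<forall>x\<in>tgtI P. lab Q (h x) = lab P x" using h unfolding isoW_def Tc_def Sc_def by simp
  define hi where "hi = inv_into (tgtI P) h"
  have hib: "bij_betw hi (srcI Q) (tgtI P)" unfolding hi_def by (rule bij_betw_inv_into[OF hb])
  have hhi: "\<And>y. y \<in> srcI Q \<Longrightarrow> h (hi y) = y" unfolding hi_def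
    using hb by (meson bij_betw_inv_into_right)
  have hih: "\<And>x. x \<in> tgtI P \<Longrightarrow> hi (h x) = x" unfolding hi_def
    using hb by (meson bij_betw_inv_into_left)
  have hiT: "\<And>y. y \<in> srcI Q \<Longrightarrow> hi y \<in> tgtI P" using hib bij_betw_apply by metis
  have hS: "\<And>x. x \<in> tgtI P \<Longrightarrow> h x \<in> srcI Q" using hb bij_betw_apply by metis
  define f :: "nat \<Rightarrow> nat" where "f = (\<lambda>a. 2 * a)"
  define g :: "nat \<Rightarrow> nat" where "g = (\<lambda>y. if y \<in> srcI Q then 2 * hi y else 2 * y + 1)"
  define R where "R = \<lparr>ev = f ` ev P \<union> g ` ev Q,
     prec = map_prod f f ` prec P \<union> map_prod g g ` prec Q \<union>
              (f ` (ev P - tgtI P)) \<times> (g ` (ev Q - srcI Q)),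
     evo = map_prod f f ` evo P \<union> map_prod g g ` evo Q,
     lab = (\<lambda>z. if even z then lab P (z div 2) else lab Q (z div 2)),
     srcI = f ` srcI P, tgtI = g ` tgtI Q\<rparr>"
  have finj: "inj_on f (ev P)" unfolding f_def by (simp add: inj_on_def)
  have ginj: "inj_on g (ev Q)"
  proof (rule inj_onI)
    fix x y assume x: "x \<in> ev Q" and y: "y \<in> ev Q" and e: "g x = g y"
    show "x = y"
    proof (cases "x \<in> srcI Q")
      case True
      show ?thesis
      proof (cases "y \<in> srcI Q")
        case True
        then have "hi x = hi y" using \<open>x \<in> srcI Q\<close> e unfolding g_def by simp
        then show ?thesis using hhi True \<open>x \<in> srcI Q\<close> by metis
      next
        case False
        then have "2 * hi x = 2 * y + 1" using \<open>x \<in> srcI Q\<close> e unfolding g_def by simp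
        then show ?thesis using par by blast
      qed
    next
      case xF: False
      show ?thesis
      proof (cases "y \<in> srcI Q")
        case True
        then have "2 * x + 1 = 2 * hi y" using xF e unfolding g_def by simp
        then show ?thesis using par by metis
      next
        case False
        then show ?thesis using xF e unfolding g_def by simp
      qed
    qed
  qed
  have gS: "\<And>y. y \<in> srcI Q \<Longrightarrow> g y = f (hi y)" unfolding g_def f_def by simp
  have gnS: "\<And>y. y \<notin> srcI Q \<Longrightarrow> g y = 2 * y + 1" unfolding g_def by simp
  have ovl: "f ` ev P \<inter> g ` ev Q = f ` tgtI P"
  proof
    show "f ` ev P \<inter> g ` ev Q \<subseteq> f ` tgtI P"
    proof
      fix z assume z: "z \<in> f ` ev P \<inter> g ` ev Q"
      then obtain a y where a: "a \<in> ev P" "z = f a" and y: "y \<in> ev Q" "z = g y" by blast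
      show "z \<in> f ` tgtI P"
      proof (cases "y \<in> srcI Q")
        case True
        then show ?thesis using y gS hiT by auto
      next
        case False
        then have "2 * a = 2 * y + 1" using a y gnS unfolding f_def by simp
        then show ?thesis using par by blast
      qed
    qed
  next
    show "f ` tgtI P \<subseteq> f ` ev P \<inter> g ` ev Q"
    proof
      fix z assume "z \<in> f ` tgtI P"
      then obtain a where a: "a \<in> tgtI P" "z = f a" by blast
      have "g (h a) = z" using gS[OF hS[OF a(1)]] hih[OF a(1)] a by simp
      moreover have "h a \<in> ev Q" using hS[OF a(1)] wf_src[OF wQ] by blast
      moreover have "a \<in> ev P" using a wf_tgt[OF wP] by blast
      ultimately show "z \<in> f ` ev P \<inter> g ` ev Q" using a by blast
    qed
  qed
  have gSf: "g ` srcI Q = f ` tgtI P"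
  proof -
    have "g ` srcI Q = f ` hi ` srcI Q" using gS by (simp add: image_image)
    also have "hi ` srcI Q = tgtI P" using hib by (simp add: bij_betw_def)
    finally show ?thesis .
  qed
  have ag: "\<forall>x\<in>tgtI P. \<forall>x'\<in>tgtI P. \<forall>y\<in>srcI Q. \<forall>y'\<in>srcI Q.
        f x = g y \<longrightarrow> f x' = g y' \<longrightarrow> ((x, x') \<in> evo P \<longleftrightarrow> (y, y') \<in> evo Q)"
  proof (intro ballI impI)
    fix x x' y y' assume x: "x \<in> tgtI P" "x' \<in> tgtI P" and y: "y \<in> srcI Q" "y' \<in> srcI Q"
      and e: "f x = g y" "f x' = g y'"
    have "x = hi y" "x' = hi y'" using e gS y unfolding f_def by auto
    then have "y = h x" "y' = h x'" using hhi y by auto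
    then show "((x, x') \<in> evo P \<longleftrightarrow> (y, y') \<in> evo Q)" using he x by simp
  qed
  have lf: "\<forall>x\<in>ev P. lab R (f x) = lab P x" unfolding R_def f_def by simp
  have lg: "\<forall>y\<in>ev Q. lab R (g y) = lab Q y"
  proof
    fix y assume y: "y \<in> ev Q"
    show "lab R (g y) = lab Q y"
    proof (cases "y \<in> srcI Q")
      case True
      then have "lab R (g y) = lab P (hi y)" unfolding R_def using gS f_def by simp
      also have "\<dots> = lab Q (h (hi y))" using hl hiT True by simp
      finally show ?thesis using hhi True by simp
    next
      case False
      then show ?thesis unfolding R_def using gnS by simp
    qed
  qed
  have "glueW P Q R f g" unfolding glueW_def
    using finj ginj ovl gSf ag lf lg by (simp add: R_def)
  then show ?thesis by blast
qed

lemma isoW_D: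
  assumes i: "isoW P Q f"
  shows "bij_betw f (ev P) (ev Q)"
    "\<forall>x\<in>ev P. \<forall>y\<in>ev P. ((x, y) \<in> prec P \<longleftrightarrow> (f x, f y) \<in> prec Q)"
    "\<forall>x\<in>ev P. \<forall>y\<in>ev P. ((x, y) \<in> evo P \<longleftrightarrow> (f x, f y) \<in> evo Q)"
    "\<forall>x\<in>ev P. lab Q (f x) = lab P x"
    "f ` srcI P = srcI Q" "f ` tgtI P = tgtI Q"
  apply (rule i[unfolded isoW_def, THEN conjunct1])
    apply (rule i[unfolded isoW_def, THEN conjunct2, THEN conjunct1])
    apply (rule i[unfolded isoW_def, THEN conjunct2, THEN conjunct2, THEN conjunct1])
    apply (rule i[unfolded isoW_def, THEN conjunct2, THEN conjunct2, THEN conjunct2, THEN conjunct1])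
    apply (rule i[unfolded isoW_def, THEN conjunct2, THEN conjunct2, THEN conjunct2, THEN conjunct2, THEN conjunct1])
    apply (rule i[unfolded isoW_def, THEN conjunct2, THEN conjunct2, THEN conjunct2, THEN conjunct2, THEN conjunct2])
  done

lemma isoW_parts:
  assumes i: "isoW P P' \<phi>" and w: "wf_ipom P" and w': "wf_ipom P'"
  shows "inj_on \<phi> (ev P)" "ev P' = \<phi> ` ev P"
    "prec P' = map_prod \<phi> \<phi> ` prec P" "evo P' = map_prod \<phi> \<phi> ` evo P"
    "tgtI P' = \<phi> ` tgtI P" "srcI P' = \<phi> ` srcI P"
    "\<phi> ` (ev P - tgtI P) = ev P' - tgtI P'" "\<phi> ` (ev P - srcI P) = ev P' - srcI P'"
    "\<And>x. x \<in> ev P \<Longrightarrow> lab P' (\<phi> x) = lab P x"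
proof -
  note d = isoW_D[OF i]
  show inj: "inj_on \<phi> (ev P)" using d(1) by (rule bij_betw_imp_inj_on)
  show ev: "ev P' = \<phi> ` ev P" using d(1) by (simp add: bij_betw_def)
  have rel: "r' = map_prod \<phi> \<phi> ` r"
    if pr: "\<forall>x\<in>ev P. \<forall>y\<in>ev P. ((x, y) \<in> r \<longleftrightarrow> (\<phi> x, \<phi> y) \<in> r')"
    and s1: "r \<subseteq> ev P \<times> ev P" and s2: "r' \<subseteq> ev P' \<times> ev P'" for r r'
  proof
    show "r' \<subseteq> map_prod \<phi> \<phi> ` r"
    proof
      fix z assume z: "z \<in> r'"
      obtain u v where uv: "z = (u, v)" by (cases z)
      have "u \<in> ev P'" "v \<in> ev P'" using s2 z uv by auto
      then obtain a b where ab: "a \<in> ev P" "b \<in> ev P" "u = \<phi> a" "v = \<phi> b" using ev by blast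
      then have "(a, b) \<in> r" using pr z uv by blast
      then show "z \<in> map_prod \<phi> \<phi> ` r"
        using ab uv image_eqI[of "(\<phi> a, \<phi> b)" "map_prod \<phi> \<phi>" "(a, b)" r] by simp
    qed
  next
    show "map_prod \<phi> \<phi> ` r \<subseteq> r'"
    proof
      fix z assume "z \<in> map_prod \<phi> \<phi> ` r"
      then obtain a b where ab: "(a, b) \<in> r" "z = (\<phi> a, \<phi> b)" by auto
      then have "a \<in> ev P" "b \<in> ev P" using s1 by auto
      then show "z \<in> r'" using pr ab by blast
    qed
  qed
  show "prec P' = map_prod \<phi> \<phi> ` prec P"
    by (rule rel[OF d(2)]) (use wf_precD[OF w] wf_precD[OF w'] in auto)
  show "evo P' = map_prod \<phi> \<phi> ` evo P"
    by (rule rel[OF d(3)]) (use wf_evoD[OF w] wf_evoD[OF w'] in auto)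
  show "tgtI P' = \<phi> ` tgtI P" using d(6) by simp
  show "srcI P' = \<phi> ` srcI P" using d(5) by simp
  show "\<phi> ` (ev P - tgtI P) = ev P' - tgtI P'"
    using inj_on_image_set_diff[OF inj _ wf_tgt[OF w]] ev d(6) by simp
  show "\<phi> ` (ev P - srcI P) = ev P' - srcI P'"
    using inj_on_image_set_diff[OF inj _ wf_src[OF w]] ev d(5) by simp
  show "\<And>x. x \<in> ev P \<Longrightarrow> lab P' (\<phi> x) = lab P x" using d(4) by blast
qed

lemma map_prod_img_comp: "map_prod f f ` map_prod \<phi> \<phi> ` X = map_prod (f \<circ> \<phi>) (f \<circ> \<phi>) ` X"
  by (simp add: image_comp map_prod.comp)

lemma glue_iso_inputs:
  assumes G: "glueW P' Q' R f g" and iP: "isoW P P' \<phi>" and iQ: "isoW Q Q' \<psi>"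
    and w: "wf_ipom P" "wf_ipom P'" "wf_ipom Q" "wf_ipom Q'"
  shows "glueW P Q R (f \<circ> \<phi>) (g \<circ> \<psi>)"
proof -
  interpret glu P' Q' R f g using w G by (simp add: glu_def)
  note p = isoW_parts[OF iP w(1,2)] and q = isoW_parts[OF iQ w(3,4)]
  have i1: "inj_on (f \<circ> \<phi>) (ev P)" using comp_inj_on[OF p(1)] finj p(2) by simp
  have i2: "inj_on (g \<circ> \<psi>) (ev Q)" using comp_inj_on[OF q(1)] ginj q(2) by simp
  have ag: "\<forall>x\<in>tgtI P. \<forall>x'\<in>tgtI P. \<forall>y\<in>srcI Q. \<forall>y'\<in>srcI Q.
        (f \<circ> \<phi>) x = (g \<circ> \<psi>) y \<longrightarrow> (f \<circ> \<phi>) x' = (g \<circ> \<psi>) y' \<longrightarrow> ((x, x') \<in> evo P \<longleftrightarrow> (y, y') \<in> evo Q)"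
  proof (intro ballI impI)
    fix x x' y y' assume x: "x \<in> tgtI P" "x' \<in> tgtI P" and y: "y \<in> srcI Q" "y' \<in> srcI Q"
      and e: "(f \<circ> \<phi>) x = (g \<circ> \<psi>) y" "(f \<circ> \<phi>) x' = (g \<circ> \<psi>) y'"
    have xe: "x \<in> ev P" "x' \<in> ev P" using x wf_tgt[OF w(1)] by auto
    have ye: "y \<in> ev Q" "y' \<in> ev Q" using y wf_src[OF w(3)] by auto
    have "(x, x') \<in> evo P \<longleftrightarrow> (\<phi> x, \<phi> x') \<in> evo P'"
      using iP xe unfolding isoW_def by blast
    moreover have "(y, y') \<in> evo Q \<longleftrightarrow> (\<psi> y, \<psi> y') \<in> evo Q'"
      using iQ ye unfolding isoW_def by blast
    moreover have "(\<phi> x, \<phi> x') \<in> evo P' \<longleftrightarrow> (\<psi> y, \<psi> y') \<in> evo Q'"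
      using agree[of "\<phi> x" "\<phi> x'" "\<psi> y" "\<psi> y'"] x y e p(5) q(6) by auto
    ultimately show "((x, x') \<in> evo P \<longleftrightarrow> (y, y') \<in> evo Q)" by simp
  qed
  have pr: "prec R = map_prod (f \<circ> \<phi>) (f \<circ> \<phi>) ` prec P \<union> map_prod (g \<circ> \<psi>) (g \<circ> \<psi>) ` prec Q \<union>
              ((f \<circ> \<phi>) ` (ev P - tgtI P)) \<times> ((g \<circ> \<psi>) ` (ev Q - srcI Q))"
    unfolding precR p(3) q(3) map_prod_img_comp image_comp[symmetric] p(7) q(8) ..
  have eo: "evo R = map_prod (f \<circ> \<phi>) (f \<circ> \<phi>) ` evo P \<union> map_prod (g \<circ> \<psi>) (g \<circ> \<psi>) ` evo Q"
    unfolding evoR p(4) q(4) map_prod_img_comp ..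
  have l1: "\<forall>x\<in>ev P. lab R ((f \<circ> \<phi>) x) = lab P x"
    using labf p(2) p(9) by simp
  have l2: "\<forall>y\<in>ev Q. lab R ((g \<circ> \<psi>) y) = lab Q y"
    using labg q(2) q(9) by simp
  have e1: "ev R = (f \<circ> \<phi>) ` ev P \<union> (g \<circ> \<psi>) ` ev Q" unfolding evR p(2) q(2) image_comp ..
  have e2: "(f \<circ> \<phi>) ` ev P \<inter> (g \<circ> \<psi>) ` ev Q = (f \<circ> \<phi>) ` tgtI P"
    using ovlset unfolding p(2) q(2) p(5) image_comp .
  have e3: "(g \<circ> \<psi>) ` srcI Q = (f \<circ> \<phi>) ` tgtI P"
    using gS unfolding q(6) p(5) image_comp .
  have e4: "srcI R = (f \<circ> \<phi>) ` srcI P" using srcR unfolding p(6) image_comp .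
  have e5: "tgtI R = (g \<circ> \<psi>) ` tgtI Q" using tgtR unfolding q(5) image_comp .
  show ?thesis unfolding glueW_def
    using i1 i2 e1 e2 e3 ag pr eo l1 l2 e4 e5 by (intro conjI)
qed


definition rk :: "(nat \<times> nat) set \<Rightarrow> nat set \<Rightarrow> nat \<Rightarrow> nat" where
  "rk r A x = card {y \<in> A. (y, x) \<in> r}"

lemma evo_3cyc: "wf_ipom P \<Longrightarrow> (a, b) \<in> evo P \<Longrightarrow> (b, c) \<in> evo P \<Longrightarrow> (c, a) \<in> evo P \<Longrightarrow> False"
proof -
  assume w: "wf_ipom P" and 1: "(a, b) \<in> evo P" and 2: "(b, c) \<in> evo P" and 3: "(c, a) \<in> evo P"
  have "(a, a) \<in> (evo P)\<^sup>+" using 1 2 3 by (meson trancl.r_into_trancl trancl_into_trancl)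
  then show False using wf_acyc[OF w] unfolding acyclic_def by blast
qed

lemma rk_lt:
  assumes w: "wf_ipom P" and A: "A \<subseteq> ev P" and ac: "\<forall>x\<in>A. \<forall>y\<in>A. (x, y) \<notin> prec P"
    and x: "x \<in> A" and y: "y \<in> A" and xy: "(x, y) \<in> evo P"
  shows "rk (evo P) A x < rk (evo P) A y"
proof -
  let ?L = "{z \<in> A. (z, x) \<in> evo P}" and ?R = "{z \<in> A. (z, y) \<in> evo P}"
  have sub: "?L \<subseteq> ?R"
  proof
    fix z assume z: "z \<in> ?L"
    then have zA: "z \<in> A" and zx: "(z, x) \<in> evo P" by auto
    have "z \<noteq> y" using zx xy wf_evo_asym[OF w] by blast
    then have "(z, y) \<in> prec P \<or> (y, z) \<in> prec P \<or> (z, y) \<in> evo P \<or> (y, z) \<in> evo P"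
      using wf_total[OF w] zA y A by blast
    moreover have "(z, y) \<notin> prec P" "(y, z) \<notin> prec P" using ac zA y by auto
    moreover have "(y, z) \<notin> evo P" using evo_3cyc[OF w zx xy] by blast
    ultimately show "z \<in> ?R" using zA by blast
  qed
  have "x \<in> ?R" "x \<notin> ?L" using x xy wf_evo_irr[OF w] by auto
  then have "?L \<subset> ?R" using sub by blast
  moreover have "finite A" using A wf_fin[OF w] by (rule finite_subset)
  then have "finite ?R" by simp
  ultimately show ?thesis unfolding rk_def by (rule psubset_card_mono[rotated])
qed

lemma rk_inj:
  assumes w: "wf_ipom P" and A: "A \<subseteq> ev P" and ac: "\<forall>x\<in>A. \<forall>y\<in>A. (x, y) \<notin> prec P"
    and x: "x \<in> A" and y: "y \<in> A" and e: "rk (evo P) A x = rk (evo P) A y"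
  shows "x = y"
proof (rule ccontr)
  assume ne: "x \<noteq> y"
  then have "(x, y) \<in> prec P \<or> (y, x) \<in> prec P \<or> (x, y) \<in> evo P \<or> (y, x) \<in> evo P"
    using wf_total[OF w] x y A by blast
  then have "(x, y) \<in> evo P \<or> (y, x) \<in> evo P" using ac x y by blast
  then show False using rk_lt[OF w A ac x y] rk_lt[OF w A ac y x] e by auto
qed

context glu begin

lemma rank_match:
  assumes a: "a \<in> tgtI P" and b: "b \<in> srcI Q" and e: "f a = g b"
  shows "rk (evo P) (tgtI P) a = rk (evo Q) (srcI Q) b"
proof -
  let ?X = "{x \<in> tgtI P. (x, a) \<in> evo P}" and ?Y = "{y \<in> srcI Q. (y, b) \<in> evo Q}"
  have "f ` ?X = g ` ?Y"
  proof
    show "f ` ?X \<subseteq> g ` ?Y"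
    proof
      fix z assume "z \<in> f ` ?X"
      then obtain x where x: "x \<in> tgtI P" "(x, a) \<in> evo P" "z = f x" by blast
      obtain y where y: "y \<in> srcI Q" "f x = g y" using matchT[OF x(1)] by blast
      have "(y, b) \<in> evo Q" using agree[OF x(1) a y(1) b y(2) e] x by blast
      then show "z \<in> g ` ?Y" using x y by blast
    qed
  next
    show "g ` ?Y \<subseteq> f ` ?X"
    proof
      fix z assume "z \<in> g ` ?Y"
      then obtain y where y: "y \<in> srcI Q" "(y, b) \<in> evo Q" "z = g y" by blast
      obtain x where x: "x \<in> tgtI P" "g y = f x" using matchS[OF y(1)] by blast
      have "(x, a) \<in> evo P" using agree[OF x(1) a y(1) b _ e] x y by simp
      then show "z \<in> f ` ?X" using x y by blast
    qed
  qed
  moreover have "card (f ` ?X) = card ?X"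
    by (rule card_image) (rule inj_on_subset[OF finj], use wf_tgt[OF wP] in blast)
  moreover have "card (g ` ?Y) = card ?Y"
    by (rule card_image) (rule inj_on_subset[OF ginj], use wf_src[OF wQ] in blast)
  ultimately show ?thesis unfolding rk_def by simp
qed

end

locale glu2 = g1: glu P Q R f g + g2: glu P Q R' f' g' for P Q R R' f g f' g'
begin

lemma key:
  assumes x: "x \<in> tgtI P" and y: "y \<in> srcI Q" and e: "f x = g y"
  shows "f' x = g' y"
proof -
  obtain y' where y': "y' \<in> srcI Q" "f' x = g' y'" using g2.matchT[OF x] by blast
  have "rk (evo Q) (srcI Q) y = rk (evo Q) (srcI Q) y'"
    using g1.rank_match[OF x y e] g2.rank_match[OF x y'(1) y'(2)] by simp
  then have "y = y'" using rk_inj[OF g1.wQ wf_src[OF g1.wQ] src_ac[OF g1.wQ] y y'(1)] by blast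
  then show ?thesis using y' by simp
qed

lemma transfer:
  assumes hf: "\<And>x. x \<in> ev P \<Longrightarrow> h (f x) = f' x" and hg: "\<And>y. y \<in> ev Q \<Longrightarrow> h (g y) = g' y"
  shows "h ` ev R = ev R'"
    "\<And>u v. (u, v) \<in> prec R \<Longrightarrow> (h u, h v) \<in> prec R'"
    "\<And>u v. (u, v) \<in> evo R \<Longrightarrow> (h u, h v) \<in> evo R'"
    "\<And>z. z \<in> ev R \<Longrightarrow> lab R' (h z) = lab R z"
    "h ` srcI R = srcI R'" "h ` tgtI R = tgtI R'"
proof -
  have "h ` f ` ev P = f' ` ev P" using hf by (simp add: image_image)
  moreover have "h ` g ` ev Q = g' ` ev Q" using hg by (simp add: image_image)
  ultimately show "h ` ev R = ev R'" unfolding g1.evR g2.evR image_Un by simp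
  show "(h u, h v) \<in> prec R'" if "(u, v) \<in> prec R" for u v
    using that
  proof (cases rule: g1.prec_cases)
    case (FF a b) then show ?thesis using hf g1.pP g2.prec_ffI by metis
  next
    case (GG a b) then show ?thesis using hg g1.pQ g2.prec_ggI by metis
  next
    case (FG a b) then show ?thesis using hf hg g2.prec_fgI by metis
  qed
  show "(h u, h v) \<in> evo R'" if "(u, v) \<in> evo R" for u v
    using that
  proof (cases rule: g1.evo_cases)
    case (FF a b) then show ?thesis using hf g1.eP g2.evo_ffI by metis
  next
    case (GG a b) then show ?thesis using hg g1.eQ g2.evo_ggI by metis
  qed
  show "lab R' (h z) = lab R z" if "z \<in> ev R" for z
    using that
  proof (cases rule: g1.evR_cases)
    case (F a) then show ?thesis using hf g1.labf g2.labf by metis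
  next
    case (G b) then show ?thesis using hg g1.labg g2.labg by metis
  qed
  show "h ` srcI R = srcI R'" unfolding g1.srcR g2.srcR image_image
    using hf wf_src[OF g1.wP] by (auto intro!: image_cong)
  show "h ` tgtI R = tgtI R'" unfolding g1.tgtR g2.tgtR image_image
    using hg wf_tgt[OF g1.wQ] by (auto intro!: image_cong)
qed

definition hmap where
  "hmap z = (if z \<in> f ` ev P then f' (inv_into (ev P) f z) else g' (inv_into (ev Q) g z))"

lemma hmap_f: "x \<in> ev P \<Longrightarrow> hmap (f x) = f' x"
  unfolding hmap_def using g1.finj by simp

lemma hmap_g: "y \<in> ev Q \<Longrightarrow> hmap (g y) = g' y"
proof -
  assume y: "y \<in> ev Q"
  show ?thesis
  proof (cases "g y \<in> f ` ev P")
    case True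
    then obtain x where x: "x \<in> ev P" "g y = f x" by blast
    have "x \<in> tgtI P" "y \<in> srcI Q" using g1.ovl[OF x(1) y] x by auto
    then have "f' x = g' y" using key x by metis
    then show ?thesis using hmap_f[OF x(1)] x by simp
  next
    case False
    then show ?thesis unfolding hmap_def using g1.ginj y by simp
  qed
qed

end

lemma glu2I: "glu P Q R f g \<Longrightarrow> glu P Q R' f' g' \<Longrightarrow> glu2 P Q R R' f g f' g'"
  unfolding glu2_def by blast

lemma glue_unique:
  assumes G1: "glu P Q R f g" and G2: "glu P Q R' f' g'"
  shows "ipom_iso R R'"
proof -
  have A: "glu2 P Q R R' f g f' g'" by (rule glu2I[OF G1 G2])
  have B: "glu2 P Q R' R f' g' f g" by (rule glu2I[OF G2 G1])
  let ?h = "glu2.hmap P Q f g f' g'" and ?h' = "glu2.hmap P Q f' g' f g"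
  have hf: "\<And>x. x \<in> ev P \<Longrightarrow> ?h (f x) = f' x" using glu2.hmap_f[OF A] .
  have hg: "\<And>y. y \<in> ev Q \<Longrightarrow> ?h (g y) = g' y" using glu2.hmap_g[OF A] .
  have hf': "\<And>x. x \<in> ev P \<Longrightarrow> ?h' (f' x) = f x" using glu2.hmap_f[OF B] .
  have hg': "\<And>y. y \<in> ev Q \<Longrightarrow> ?h' (g' y) = g y" using glu2.hmap_g[OF B] .
  note T1 = glu2.transfer[OF A, of ?h, OF hf hg]
  note T2 = glu2.transfer[OF B, of ?h', OF hf' hg']
  have inv1: "\<And>z. z \<in> ev R \<Longrightarrow> ?h' (?h z) = z"
  proof -
    fix z assume "z \<in> ev R"
    then have "z \<in> f ` ev P \<union> g ` ev Q" using glu.evR[OF G1] by simp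
    then show "?h' (?h z) = z"
    proof
      assume "z \<in> f ` ev P"
      then obtain x where "x \<in> ev P" "z = f x" by blast
      then show ?thesis using hf hf' by simp
    next
      assume "z \<in> g ` ev Q"
      then obtain x where "x \<in> ev Q" "z = g x" by blast
      then show ?thesis using hg hg' by simp
    qed
  qed
  have inv2: "\<And>z. z \<in> ev R' \<Longrightarrow> ?h (?h' z) = z"
  proof -
    fix z assume "z \<in> ev R'"
    then have "z \<in> f' ` ev P \<union> g' ` ev Q" using glu.evR[OF G2] by simp
    then show "?h (?h' z) = z"
    proof
      assume "z \<in> f' ` ev P"
      then obtain x where "x \<in> ev P" "z = f' x" by blast
      then show ?thesis using hf hf' by simp
    next
      assume "z \<in> g' ` ev Q"
      then obtain x where "x \<in> ev Q" "z = g' x" by blast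
      then show ?thesis using hg hg' by simp
    qed
  qed
  have b: "bij_betw ?h (ev R) (ev R')"
  proof (rule bij_betw_byWitness)
    show "\<forall>a\<in>ev R. ?h' (?h a) = a" using inv1 by blast
    show "\<forall>a\<in>ev R'. ?h (?h' a) = a" using inv2 by blast
    show "?h ` ev R \<subseteq> ev R'" using T1(1) by simp
    show "?h' ` ev R' \<subseteq> ev R" using T2(1) by simp
  qed
  have inR: "\<And>z. z \<in> ev R \<Longrightarrow> ?h z \<in> ev R'" using T1(1) by blast
  have pr: "\<forall>x\<in>ev R. \<forall>y\<in>ev R. ((x, y) \<in> prec R \<longleftrightarrow> (?h x, ?h y) \<in> prec R')"
  proof (intro ballI iffI)
    fix x y assume "x \<in> ev R" "y \<in> ev R" "(x, y) \<in> prec R"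
    then show "(?h x, ?h y) \<in> prec R'" using T1(2) by blast
  next
    fix x y assume xy: "x \<in> ev R" "y \<in> ev R" and "(?h x, ?h y) \<in> prec R'"
    then have "(?h' (?h x), ?h' (?h y)) \<in> prec R" using T2(2) by blast
    then show "(x, y) \<in> prec R" using inv1 xy by simp
  qed
  have eo: "\<forall>x\<in>ev R. \<forall>y\<in>ev R. ((x, y) \<in> evo R \<longleftrightarrow> (?h x, ?h y) \<in> evo R')"
  proof (intro ballI iffI)
    fix x y assume "x \<in> ev R" "y \<in> ev R" "(x, y) \<in> evo R"
    then show "(?h x, ?h y) \<in> evo R'" using T1(3) by blast
  next
    fix x y assume xy: "x \<in> ev R" "y \<in> ev R" and "(?h x, ?h y) \<in> evo R'"
    then have "(?h' (?h x), ?h' (?h y)) \<in> evo R" using T2(3) by blast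
    then show "(x, y) \<in> evo R" using inv1 xy by simp
  qed
  have lb: "\<forall>x\<in>ev R. lab R' (?h x) = lab R x" using T1(4) by blast
  have "isoW R R' ?h" unfolding isoW_def using b pr eo lb T1(5) T1(6) by (intro conjI)
  then show ?thesis using iso_W by blast
qed


lemma mem_mp: "(u, v) \<in> map_prod h h ` X \<longleftrightarrow> (\<exists>a b. (a, b) \<in> X \<and> u = h a \<and> v = h b)"
  by force

lemma glue_rid: "wf_ipom P \<Longrightarrow> glueW P (Tc P) P id id"
proof -
  assume w: "wf_ipom P"
  have T: "tgtI P \<subseteq> ev P" using wf_tgt[OF w] .
  have e1: "ev P = id ` ev P \<union> id ` ev (Tc P)" using T by (auto simp: Tc_def)
  have e2: "id ` ev P \<inter> id ` ev (Tc P) = id ` tgtI P" using T by (auto simp: Tc_def)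
  have e3: "id ` srcI (Tc P) = id ` tgtI P" by (simp add: Tc_def)
  have ag: "\<forall>x\<in>tgtI P. \<forall>x'\<in>tgtI P. \<forall>y\<in>srcI (Tc P). \<forall>y'\<in>srcI (Tc P).
        id x = id y \<longrightarrow> id x' = id y' \<longrightarrow> ((x, x') \<in> evo P \<longleftrightarrow> (y, y') \<in> evo (Tc P))"
    by (auto simp: Tc_def)
  have pr: "prec P = map_prod id id ` prec P \<union> map_prod id id ` prec (Tc P) \<union>
              (id ` (ev P - tgtI P)) \<times> (id ` (ev (Tc P) - srcI (Tc P)))"
    by (simp add: Tc_def map_prod.id)
  have eo: "evo P = map_prod id id ` evo P \<union> map_prod id id ` evo (Tc P)"
    by (auto simp: Tc_def map_prod.id)
  have l: "\<forall>x\<in>ev P. lab P (id x) = lab P x" "\<forall>y\<in>ev (Tc P). lab P (id y) = lab (Tc P) y"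
    by (auto simp: Tc_def)
  have st: "srcI P = id ` srcI P" "tgtI P = id ` tgtI (Tc P)" by (auto simp: Tc_def)
  show ?thesis unfolding glueW_def
    using e1 e2 e3 ag pr eo l st by (intro conjI) simp_all
qed

locale glu3 = a: glu P Q R1 f1 g1 + b: glu R1 Z W f2 g2 for P Q R1 Z W f1 g1 f2 g2
begin

definition E2 where "E2 = f2 ` g1 ` ev Q \<union> g2 ` ev Z"

definition R2 :: "'a ipom" where
  "R2 = \<lparr>ev = E2, prec = prec W \<inter> E2 \<times> E2, evo = evo W \<inter> E2 \<times> E2, lab = lab W,
         srcI = f2 ` g1 ` srcI Q, tgtI = tgtI W\<rparr>"

lemma R2_simps: "ev R2 = E2" "prec R2 = prec W \<inter> E2 \<times> E2" "evo R2 = evo W \<inter> E2 \<times> E2"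
  "lab R2 = lab W" "srcI R2 = f2 ` g1 ` srcI Q" "tgtI R2 = tgtI W"
  unfolding R2_def by simp_all

lemma F1:
  assumes r: "r \<in> ev R1" and e: "f2 r \<in> E2"
  shows "\<exists>q\<in>ev Q. r = g1 q"
proof -
  from e consider "f2 r \<in> f2 ` g1 ` ev Q" | "f2 r \<in> g2 ` ev Z" unfolding E2_def by blast
  then show ?thesis
  proof cases
    case 1
    then obtain q where q: "q \<in> ev Q" "f2 r = f2 (g1 q)" by blast
    have "g1 q \<in> ev R1" using a.gin q(1) .
    then have "r = g1 q" using b.feq[OF r] q by blast
    then show ?thesis using q by blast
  next
    case 2
    then obtain z where z: "z \<in> ev Z" "f2 r = g2 z" by blast
    have "r \<in> tgtI R1" using b.ovl(1)[OF r z(1) z(2)] .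
    then show ?thesis using a.tgtR wf_tgt[OF a.wQ] by blast
  qed
qed

lemma g1T: "q \<in> ev Q \<Longrightarrow> g1 q \<in> tgtI R1 \<longleftrightarrow> q \<in> tgtI Q"
  using a.tgtR a.geq wf_tgt[OF a.wQ] by blast

lemma inj12: "inj_on (f2 \<circ> g1) (ev Q)"
proof (rule comp_inj_on[OF a.ginj])
  show "inj_on f2 (g1 ` ev Q)" using inj_on_subset[OF b.finj] a.evR by blast
qed

lemma inj11: "inj_on (f2 \<circ> f1) (ev P)"
proof (rule comp_inj_on[OF a.finj])
  show "inj_on f2 (f1 ` ev P)" using inj_on_subset[OF b.finj] a.evR by blast
qed

lemma ovl2: "(f2 \<circ> g1) ` ev Q \<inter> g2 ` ev Z = (f2 \<circ> g1) ` tgtI Q"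
proof
  show "(f2 \<circ> g1) ` ev Q \<inter> g2 ` ev Z \<subseteq> (f2 \<circ> g1) ` tgtI Q"
  proof
    fix z assume "z \<in> (f2 \<circ> g1) ` ev Q \<inter> g2 ` ev Z"
    then obtain q w where q: "q \<in> ev Q" "w \<in> ev Z" "z = f2 (g1 q)" "z = g2 w" by auto
    have "g1 q \<in> tgtI R1" using b.ovl(1)[OF a.gin[OF q(1)] q(2)] q by simp
    then have "q \<in> tgtI Q" using g1T q(1) by blast
    then show "z \<in> (f2 \<circ> g1) ` tgtI Q" using q by auto
  qed
next
  show "(f2 \<circ> g1) ` tgtI Q \<subseteq> (f2 \<circ> g1) ` ev Q \<inter> g2 ` ev Z"
  proof
    fix z assume "z \<in> (f2 \<circ> g1) ` tgtI Q"
    then obtain q where q: "q \<in> tgtI Q" "z = f2 (g1 q)" by auto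
    have "g1 q \<in> tgtI R1" using a.tgtR q by blast
    then obtain w where w: "w \<in> srcI Z" "f2 (g1 q) = g2 w" using b.matchT by blast
    have "q \<in> ev Q" "w \<in> ev Z" using q w wf_tgt[OF a.wQ] wf_src[OF b.wQ] by auto
    then have "z \<in> (f2 \<circ> g1) ` ev Q" "z \<in> g2 ` ev Z"
      using q(2) w(2) image_eqI[of z "f2 \<circ> g1" q "ev Q"] image_eqI[of z g2 w "ev Z"] by auto
    then show "z \<in> (f2 \<circ> g1) ` ev Q \<inter> g2 ` ev Z" by blast
  qed
qed

lemma gS2: "g2 ` srcI Z = (f2 \<circ> g1) ` tgtI Q"
  using b.gS a.tgtR by (simp add: image_comp)

lemma agree2: "\<forall>x\<in>tgtI Q. \<forall>x'\<in>tgtI Q. \<forall>y\<in>srcI Z. \<forall>y'\<in>srcI Z.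
        (f2 \<circ> g1) x = g2 y \<longrightarrow> (f2 \<circ> g1) x' = g2 y' \<longrightarrow> ((x, x') \<in> evo Q \<longleftrightarrow> (y, y') \<in> evo Z)"
proof (intro ballI impI)
  fix x x' y y' assume x: "x \<in> tgtI Q" "x' \<in> tgtI Q" and y: "y \<in> srcI Z" "y' \<in> srcI Z"
    and e: "(f2 \<circ> g1) x = g2 y" "(f2 \<circ> g1) x' = g2 y'"
  have xe: "x \<in> ev Q" "x' \<in> ev Q" using x wf_tgt[OF a.wQ] by auto
  have "(x, x') \<in> evo Q \<longleftrightarrow> (g1 x, g1 x') \<in> evo R1"
    using a.evo_ggD[OF xe] a.evo_ggI by blast
  moreover have "g1 x \<in> tgtI R1" "g1 x' \<in> tgtI R1" using a.tgtR x by auto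
  ultimately show "((x, x') \<in> evo Q \<longleftrightarrow> (y, y') \<in> evo Z)"
    using b.agree[of "g1 x" "g1 x'" y y'] y e by simp
qed

lemma prec2: "prec R2 = map_prod (f2 \<circ> g1) (f2 \<circ> g1) ` prec Q \<union> map_prod g2 g2 ` prec Z \<union>
              ((f2 \<circ> g1) ` (ev Q - tgtI Q)) \<times> (g2 ` (ev Z - srcI Z))"
proof (rule antisym; rule subrelI)
  fix u v assume uv: "(u, v) \<in> prec R2"
  then have uv': "(u, v) \<in> prec W" "u \<in> E2" "v \<in> E2" unfolding R2_simps by auto
  from uv'(1) show "(u, v) \<in> map_prod (f2 \<circ> g1) (f2 \<circ> g1) ` prec Q \<union> map_prod g2 g2 ` prec Z \<union>
              ((f2 \<circ> g1) ` (ev Q - tgtI Q)) \<times> (g2 ` (ev Z - srcI Z))"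
  proof (cases rule: b.prec_cases)
    case (FF r r')
    have re: "r \<in> ev R1" "r' \<in> ev R1" using FF b.pP by auto
    obtain q where q: "q \<in> ev Q" "r = g1 q" using F1[OF re(1)] uv'(2) FF by blast
    obtain q' where q': "q' \<in> ev Q" "r' = g1 q'" using F1[OF re(2)] uv'(3) FF by blast
    have "(q, q') \<in> prec Q" using a.prec_ggD[OF q(1) q'(1)] FF q q' by simp
    then show ?thesis using FF q q' by (auto simp: mem_mp)
  next
    case (GG w w')
    then show ?thesis by (auto simp: mem_mp)
  next
    case (FG r w)
    obtain q where q: "q \<in> ev Q" "r = g1 q" using F1[OF FG(1)] uv'(2) FG by blast
    have "q \<notin> tgtI Q" using g1T[OF q(1)] FG q by simp
    then show ?thesis using FG q by auto
  qed
next
  fix u v assume uv: "(u, v) \<in> map_prod (f2 \<circ> g1) (f2 \<circ> g1) ` prec Q \<union> map_prod g2 g2 ` prec Z \<union>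
              ((f2 \<circ> g1) ` (ev Q - tgtI Q)) \<times> (g2 ` (ev Z - srcI Z))"
  then consider (A) q q' where "(q, q') \<in> prec Q" "u = f2 (g1 q)" "v = f2 (g1 q')"
    | (B) w w' where "(w, w') \<in> prec Z" "u = g2 w" "v = g2 w'"
    | (C) q w where "q \<in> ev Q" "q \<notin> tgtI Q" "w \<in> ev Z" "w \<notin> srcI Z" "u = f2 (g1 q)" "v = g2 w"
    by (auto simp: mem_mp)
  then show "(u, v) \<in> prec R2"
  proof cases
    case A
    have "(u, v) \<in> prec W" using A a.prec_ggI b.prec_ffI by simp
    moreover have "u \<in> E2" "v \<in> E2" using A a.pQ unfolding E2_def by auto
    ultimately show ?thesis unfolding R2_simps by simp
  next
    case B
    have "(u, v) \<in> prec W" using B b.prec_ggI by simp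
    moreover have "u \<in> E2" "v \<in> E2" using B b.pQ unfolding E2_def by auto
    ultimately show ?thesis unfolding R2_simps by simp
  next
    case C
    have "g1 q \<notin> tgtI R1" using g1T C by simp
    then have "(u, v) \<in> prec W" using C b.prec_fgI[OF a.gin] by simp
    moreover have "u \<in> E2" "v \<in> E2" using C unfolding E2_def by auto
    ultimately show ?thesis unfolding R2_simps by simp
  qed
qed

lemma evo2: "evo R2 = map_prod (f2 \<circ> g1) (f2 \<circ> g1) ` evo Q \<union> map_prod g2 g2 ` evo Z"
proof (rule antisym; rule subrelI)
  fix u v assume uv: "(u, v) \<in> evo R2"
  then have uv': "(u, v) \<in> evo W" "u \<in> E2" "v \<in> E2" unfolding R2_simps by auto
  from uv'(1) show "(u, v) \<in> map_prod (f2 \<circ> g1) (f2 \<circ> g1) ` evo Q \<union> map_prod g2 g2 ` evo Z"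
  proof (cases rule: b.evo_cases)
    case (FF r r')
    have re: "r \<in> ev R1" "r' \<in> ev R1" using FF b.eP by auto
    obtain q where q: "q \<in> ev Q" "r = g1 q" using F1[OF re(1)] uv'(2) FF by blast
    obtain q' where q': "q' \<in> ev Q" "r' = g1 q'" using F1[OF re(2)] uv'(3) FF by blast
    have "(q, q') \<in> evo Q" using a.evo_ggD[OF q(1) q'(1)] FF q q' by simp
    then show ?thesis using FF q q' by (auto simp: mem_mp)
  next
    case (GG w w')
    then show ?thesis by (auto simp: mem_mp)
  qed
next
  fix u v assume uv: "(u, v) \<in> map_prod (f2 \<circ> g1) (f2 \<circ> g1) ` evo Q \<union> map_prod g2 g2 ` evo Z"
  then consider (A) q q' where "(q, q') \<in> evo Q" "u = f2 (g1 q)" "v = f2 (g1 q')"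
    | (B) w w' where "(w, w') \<in> evo Z" "u = g2 w" "v = g2 w'"
    by (auto simp: mem_mp)
  then show "(u, v) \<in> evo R2"
  proof cases
    case A
    have "(u, v) \<in> evo W" using A a.evo_ggI b.evo_ffI by simp
    moreover have "u \<in> E2" "v \<in> E2" using A a.eQ unfolding E2_def by auto
    ultimately show ?thesis unfolding R2_simps by simp
  next
    case B
    have "(u, v) \<in> evo W" using B b.evo_ggI by simp
    moreover have "u \<in> E2" "v \<in> E2" using B b.eQ unfolding E2_def by auto
    ultimately show ?thesis unfolding R2_simps by simp
  qed
qed

lemma glue2: "glueW Q Z R2 (f2 \<circ> g1) g2"
proof -
  have e: "ev R2 = (f2 \<circ> g1) ` ev Q \<union> g2 ` ev Z" unfolding R2_simps E2_def by (simp add: image_comp)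
  have l1: "\<forall>x\<in>ev Q. lab R2 ((f2 \<circ> g1) x) = lab Q x"
    using a.labg b.labf a.gin unfolding R2_simps by simp
  have l2: "\<forall>y\<in>ev Z. lab R2 (g2 y) = lab Z y" using b.labg unfolding R2_simps by simp
  have s: "srcI R2 = (f2 \<circ> g1) ` srcI Q" unfolding R2_simps by (simp add: image_comp)
  have t: "tgtI R2 = g2 ` tgtI Z" unfolding R2_simps by (rule b.tgtR)
  show ?thesis unfolding glueW_def
    using inj12 b.ginj e ovl2 gS2 agree2 prec2 evo2 l1 l2 s t by (intro conjI)
qed

end


context glu3 begin

lemma notE2:
  assumes u: "u \<in> ev W" and n: "u \<notin> E2"
  shows "\<exists>a\<in>ev P. a \<notin> tgtI P \<and> u = f2 (f1 a)"
proof -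
  have "u \<notin> g2 ` ev Z" using n unfolding E2_def by blast
  then obtain r where r: "r \<in> ev R1" "u = f2 r" using u b.evR by blast
  have "r \<notin> g1 ` ev Q" using n r unfolding E2_def by blast
  then obtain a where a: "a \<in> ev P" "r = f1 a" using r a.evR by blast
  have "a \<notin> tgtI P"
  proof
    assume "a \<in> tgtI P"
    then obtain q where "q \<in> srcI Q" "f1 a = g1 q" using a.matchT by blast
    then have "r \<in> g1 ` ev Q" using a wf_src[OF a.wQ] by auto
    then show False using \<open>r \<notin> g1 ` ev Q\<close> by blast
  qed
  then show ?thesis using a r by blast
qed

lemma fE2: "a \<in> ev P \<Longrightarrow> f2 (f1 a) \<in> E2 \<Longrightarrow> a \<in> tgtI P"
  using F1[OF a.fin] a.ovl(1) by metis

lemma TE2: "a \<in> tgtI P \<Longrightarrow> f2 (f1 a) \<in> E2"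
proof -
  assume a: "a \<in> tgtI P"
  then obtain q where "q \<in> srcI Q" "f1 a = g1 q" using a.matchT by blast
  then show ?thesis unfolding E2_def using wf_src[OF a.wQ] by auto
qed

lemma src2: "srcI R2 = (f2 \<circ> f1) ` tgtI P"
  unfolding R2_simps using a.gS by (simp add: image_comp)

lemma E2W: "E2 \<subseteq> ev W"
  unfolding E2_def using b.evR a.evR by auto

lemma prec1: "prec W = map_prod (f2 \<circ> f1) (f2 \<circ> f1) ` prec P \<union> map_prod id id ` prec R2 \<union>
              ((f2 \<circ> f1) ` (ev P - tgtI P)) \<times> (id ` (ev R2 - srcI R2))"
proof (rule antisym; rule subrelI)
  fix u v assume uv: "(u, v) \<in> prec W"
  have uW: "u \<in> ev W" "v \<in> ev W" using b.prec_sub[OF uv] by auto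
  have ffc: "(u, v) \<in> map_prod (f2 \<circ> f1) (f2 \<circ> f1) ` prec P"
    if "a \<in> ev P" "b \<in> ev P" "u = f2 (f1 a)" "v = f2 (f1 b)" for a b
  proof -
    have "(f1 a, f1 b) \<in> prec R1" using b.prec_ffD[OF a.fin a.fin] that uv by simp
    then have "(a, b) \<in> prec P" using a.prec_ffD that by blast
    then show ?thesis using that by (auto simp: mem_mp)
  qed
  show "(u, v) \<in> map_prod (f2 \<circ> f1) (f2 \<circ> f1) ` prec P \<union> map_prod id id ` prec R2 \<union>
              ((f2 \<circ> f1) ` (ev P - tgtI P)) \<times> (id ` (ev R2 - srcI R2))"
  proof (cases "u \<in> E2")
    case uE: True
    show ?thesis
    proof (cases "v \<in> E2")
      case True
      then have "(u, v) \<in> prec R2" unfolding R2_simps using uv uE by simp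
      then show ?thesis by (simp add: map_prod.id)
    next
      case vE: False
      obtain b where b: "b \<in> ev P" "b \<notin> tgtI P" "v = f2 (f1 b)" using notE2[OF uW(2) vE] by blast
      show ?thesis
      proof (cases "u \<in> (f2 \<circ> f1) ` ev P")
        case True
        then obtain a where "a \<in> ev P" "u = f2 (f1 a)" by auto
        then show ?thesis using ffc b by blast
      next
        case uF: False
        have False using uv
        proof (cases rule: b.prec_cases)
          case (FF r r')
          have re: "r \<in> ev R1" "r' \<in> ev R1" using FF b.pP by auto
          have "r' = f1 b" using b.feq[OF re(2) a.fin[OF b(1)]] FF b by simp
          have rF: "r \<notin> f1 ` ev P" using uF FF by auto
          then obtain q where q: "q \<in> ev Q" "r = g1 q" using re a.evR by blast
          have "(g1 q, f1 b) \<in> prec R1" using FF q \<open>r' = f1 b\<close> by simp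
          then show False
          proof (cases rule: a.prec_cases)
            case (FF c d) then show False using rF q a.pP by auto
          next
            case (GG c d)
            have "d \<in> srcI Q" using a.ovl(2)[OF b(1), of d] GG a.pQ by metis
            then show False using GG wf_srcmin[OF a.wQ] by blast
          next
            case (FG c d) then show False using rF q by auto
          qed
        next
          case (GG w w')
          then show False using vE b.pQ unfolding E2_def by auto
        next
          case (FG r w)
          then show False using vE unfolding E2_def by auto
        qed
        then show ?thesis ..
      qed
    qed
  next
    case uE: False
    obtain a where a: "a \<in> ev P" "a \<notin> tgtI P" "u = f2 (f1 a)" using notE2[OF uW(1) uE] by blast
    show ?thesis
    proof (cases "v \<in> (f2 \<circ> f1) ` ev P")
      case True
      then obtain b where "b \<in> ev P" "v = f2 (f1 b)" by auto
      then show ?thesis using ffc a by blast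
    next
      case False
      then have vE: "v \<in> E2" using notE2[OF uW(2)] by auto
      have "v \<notin> srcI R2" using False src2 wf_tgt[OF a.wP] by auto
      then have "v \<in> id ` (ev R2 - srcI R2)" using vE unfolding R2_simps by simp
      moreover have "u \<in> (f2 \<circ> f1) ` (ev P - tgtI P)" using a by auto
      ultimately show ?thesis by blast
    qed
  qed
next
  fix u v assume uv: "(u, v) \<in> map_prod (f2 \<circ> f1) (f2 \<circ> f1) ` prec P \<union> map_prod id id ` prec R2 \<union>
              ((f2 \<circ> f1) ` (ev P - tgtI P)) \<times> (id ` (ev R2 - srcI R2))"
  then consider (A) a b where "(a, b) \<in> prec P" "u = f2 (f1 a)" "v = f2 (f1 b)"
    | (B) "(u, v) \<in> prec R2"
    | (C) a where "a \<in> ev P" "a \<notin> tgtI P" "u = f2 (f1 a)" "v \<in> E2" "v \<notin> srcI R2"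
    unfolding R2_simps(1) by (auto simp: mem_mp map_prod.id)
  then show "(u, v) \<in> prec W"
  proof cases
    case A then show ?thesis using a.prec_ffI b.prec_ffI by simp
  next
    case B then show ?thesis unfolding R2_simps by simp
  next
    case C
    have fa: "f1 a \<in> ev R1" "f1 a \<notin> tgtI R1"
    proof -
      show "f1 a \<in> ev R1" using a.fin C by simp
      show "f1 a \<notin> tgtI R1"
      proof
        assume "f1 a \<in> tgtI R1"
        then obtain t where "t \<in> tgtI Q" "f1 a = g1 t" using a.tgtR by blast
        then show False using a.ovl(1)[OF C(1)] C(2) wf_tgt[OF a.wQ] by blast
      qed
    qed
    have viaQ: ?thesis if q: "q \<in> ev Q" "q \<notin> srcI Q" "v = f2 (g1 q)" for q
    proof -
      have "(f1 a, g1 q) \<in> prec R1" using a.prec_fgI[OF C(1) C(2) q(1) q(2)] .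
      then show ?thesis using b.prec_ffI C q by simp
    qed
    from C(4) consider (Q) q where "q \<in> ev Q" "v = f2 (g1 q)" | (Z) w where "w \<in> ev Z" "v = g2 w"
      unfolding E2_def by auto
    then show ?thesis
    proof cases
      case Q
      have "q \<notin> srcI Q" using C(5) Q unfolding R2_simps by auto
      then show ?thesis using viaQ Q by blast
    next
      case Z
      show ?thesis
      proof (cases "w \<in> srcI Z")
        case True
        then obtain r where r: "r \<in> tgtI R1" "g2 w = f2 r" using b.matchS by blast
        then obtain t where t: "t \<in> tgtI Q" "r = g1 t" using a.tgtR by blast
        have tQ: "t \<in> ev Q" using t wf_tgt[OF a.wQ] by blast
        have "t \<notin> srcI Q" using C(5) Z r t unfolding R2_simps by auto
        then show ?thesis using viaQ[OF tQ] Z r t by simp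
      next
        case False
        then show ?thesis using b.prec_fgI[OF fa Z(1) False] C Z by simp
      qed
    qed
  qed
qed

lemma evo1: "evo W = map_prod (f2 \<circ> f1) (f2 \<circ> f1) ` evo P \<union> map_prod id id ` evo R2"
proof (rule antisym; rule subrelI)
  fix u v assume uv: "(u, v) \<in> evo W"
  show "(u, v) \<in> map_prod (f2 \<circ> f1) (f2 \<circ> f1) ` evo P \<union> map_prod id id ` evo R2"
    using uv
  proof (cases rule: b.evo_cases)
    case (FF r r')
    from FF(1) show ?thesis
    proof (cases rule: a.evo_cases)
      case (FF a b)
      then show ?thesis using \<open>u = f2 r\<close> \<open>v = f2 r'\<close> by (auto simp: mem_mp)
    next
      case (GG q q')
      have "u \<in> E2" "v \<in> E2" using GG \<open>u = f2 r\<close> \<open>v = f2 r'\<close> a.eQ unfolding E2_def by auto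
      then show ?thesis using uv unfolding R2_simps by (simp add: map_prod.id)
    qed
  next
    case (GG w w')
    have "u \<in> E2" "v \<in> E2" using GG b.eQ unfolding E2_def by auto
    then show ?thesis using uv unfolding R2_simps by (simp add: map_prod.id)
  qed
next
  fix u v assume "(u, v) \<in> map_prod (f2 \<circ> f1) (f2 \<circ> f1) ` evo P \<union> map_prod id id ` evo R2"
  then consider (A) a b where "(a, b) \<in> evo P" "u = f2 (f1 a)" "v = f2 (f1 b)"
    | (B) "(u, v) \<in> evo R2"
    by (auto simp: mem_mp map_prod.id)
  then show "(u, v) \<in> evo W"
  proof cases
    case A then show ?thesis using a.evo_ffI b.evo_ffI by simp
  next
    case B then show ?thesis unfolding R2_simps by simp
  qed
qed

lemma agree1: "\<forall>x\<in>tgtI P. \<forall>x'\<in>tgtI P. \<forall>y\<in>srcI R2. \<forall>y'\<in>srcI R2.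
        (f2 \<circ> f1) x = id y \<longrightarrow> (f2 \<circ> f1) x' = id y' \<longrightarrow> ((x, x') \<in> evo P \<longleftrightarrow> (y, y') \<in> evo R2)"
proof (intro ballI impI)
  fix x x' y y' assume x: "x \<in> tgtI P" "x' \<in> tgtI P" and y: "y \<in> srcI R2" "y' \<in> srcI R2"
    and e: "(f2 \<circ> f1) x = id y" "(f2 \<circ> f1) x' = id y'"
  have xe: "x \<in> ev P" "x' \<in> ev P" using x wf_tgt[OF a.wP] by auto
  have "(x, x') \<in> evo P \<longleftrightarrow> (f1 x, f1 x') \<in> evo R1"
    using a.evo_ffD[OF xe] a.evo_ffI by blast
  also have "\<dots> \<longleftrightarrow> (f2 (f1 x), f2 (f1 x')) \<in> evo W"
    using b.evo_ffD[OF a.fin[OF xe(1)] a.fin[OF xe(2)]] b.evo_ffI by blast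
  also have "\<dots> \<longleftrightarrow> (y, y') \<in> evo R2"
    using e TE2[OF x(1)] TE2[OF x(2)] unfolding R2_simps by auto
  finally show "((x, x') \<in> evo P \<longleftrightarrow> (y, y') \<in> evo R2)" .
qed

lemma glue1: "glueW P R2 W (f2 \<circ> f1) id"
proof -
  have e: "ev W = (f2 \<circ> f1) ` ev P \<union> id ` ev R2"
    unfolding R2_simps E2_def b.evR a.evR by (auto simp: image_comp)
  have o: "(f2 \<circ> f1) ` ev P \<inter> id ` ev R2 = (f2 \<circ> f1) ` tgtI P"
  proof
    show "(f2 \<circ> f1) ` ev P \<inter> id ` ev R2 \<subseteq> (f2 \<circ> f1) ` tgtI P"
      using fE2 unfolding R2_simps by auto
    show "(f2 \<circ> f1) ` tgtI P \<subseteq> (f2 \<circ> f1) ` ev P \<inter> id ` ev R2"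
      using TE2 wf_tgt[OF a.wP] unfolding R2_simps by auto
  qed
  have s: "id ` srcI R2 = (f2 \<circ> f1) ` tgtI P" using src2 by simp
  have l1: "\<forall>x\<in>ev P. lab W ((f2 \<circ> f1) x) = lab P x" using a.labf b.labf a.fin by simp
  have l2: "\<forall>y\<in>ev R2. lab W (id y) = lab R2 y" unfolding R2_simps by simp
  have sr: "srcI W = (f2 \<circ> f1) ` srcI P" using b.srcR a.srcR by (simp add: image_comp)
  have tg: "tgtI W = id ` tgtI R2" unfolding R2_simps by simp
  have i: "inj_on id (ev R2)" by simp
  show ?thesis unfolding glueW_def
    using inj11 i e o s agree1 prec1 evo1 l1 l2 sr tg by (intro conjI)
qed

end


lemma gluI: "wf_ipom P \<Longrightarrow> wf_ipom Q \<Longrightarrow> glueW P Q R f g \<Longrightarrow> glu P Q R f g"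
  unfolding glu_def by blast

lemma pcomp_cls:
  assumes wP: "wf_ipom P" and wQ: "wf_ipom Q" and c: "ipom_iso (Tc P) (Sc Q)"
    and G: "glueW P Q R f g"
  shows "pcomp (cls P) (cls Q) = cls R"
proof -
  let ?P' = "rep (cls P)" and ?Q' = "rep (cls Q)"
  have rP: "wf_ipom ?P'" "ipom_iso P ?P'" using rep_cls[OF wP] by auto
  have rQ: "wf_ipom ?Q'" "ipom_iso Q ?Q'" using rep_cls[OF wQ] by auto
  have "ipom_iso (Tc ?P') (Tc P)" using iso_sym[OF wf_Tc[OF wP] iso_Tc[OF wP rP(2)]] .
  moreover have "ipom_iso (Sc Q) (Sc ?Q')" using iso_Sc[OF wQ rQ(2)] .
  ultimately have c': "ipom_iso (Tc ?P') (Sc ?Q')" using c iso_trans by metis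
  obtain R0 f0 g0 where "glueW ?P' ?Q' R0 f0 g0" using glue_exists[OF rP(1) rQ(1) c'] by blast
  then have "is_glue ?P' ?Q' R0" using is_glue_W by blast
  then have "is_glue ?P' ?Q' (glue ?P' ?Q')" unfolding glue_def by (rule someI)
  then obtain f' g' where G': "glueW ?P' ?Q' (glue ?P' ?Q') f' g'" using is_glue_W by blast
  obtain \<phi> where \<phi>: "isoW P ?P' \<phi>" using rP(2) iso_W by blast
  obtain \<psi> where \<psi>: "isoW Q ?Q' \<psi>" using rQ(2) iso_W by blast
  have G2: "glueW P Q (glue ?P' ?Q') (f' \<circ> \<phi>) (g' \<circ> \<psi>)"
    by (rule glue_iso_inputs[OF G' \<phi> \<psi> wP rP(1) wQ rQ(1)])
  have g1: "glu P Q R f g" by (rule gluI[OF wP wQ G])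
  have g2: "glu P Q (glue ?P' ?Q') (f' \<circ> \<phi>) (g' \<circ> \<psi>)" by (rule gluI[OF wP wQ G2])
  have "ipom_iso R (glue ?P' ?Q')" by (rule glue_unique[OF g1 g2])
  then have "cls R = cls (glue ?P' ?Q')" using cls_eq_iff glu.wfR[OF g1] glu.wfR[OF g2] by blast
  then show ?thesis unfolding pcomp_def by simp
qed

lemma compat_rep:
  assumes X: "X \<in> iiPoms k" and Y: "Y \<in> iiPoms k" and e: "pomS Y = pomT X"
  shows "ipom_iso (Tc (rep X)) (Sc (rep Y))"
proof -
  have w: "wf_ipom (rep X)" "wf_ipom (rep Y)" using iiPoms_rep X Y by blast+
  have "cls (Tc (rep X)) = cls (Sc (rep Y))" using e unfolding pomS_def pomT_def Sc_def Tc_def by simp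
  then show ?thesis using cls_eq_iff wf_Tc[OF w(1)] wf_Sc[OF w(2)] by blast
qed

lemma pcomp_props:
  assumes X: "X \<in> iiPoms k" and Y: "Y \<in> iiPoms k" and e: "pomS Y = pomT X"
  shows "pcomp X Y \<in> iiPoms k" "pomS (pcomp X Y) = pomS X" "pomT (pcomp X Y) = pomT Y"
proof -
  let ?P = "rep X" and ?Q = "rep Y"
  have w: "wf_ipom ?P" "width_le k ?P" "cls ?P = X" using iiPoms_rep[OF X] by auto
  have v: "wf_ipom ?Q" "width_le k ?Q" "cls ?Q = Y" using iiPoms_rep[OF Y] by auto
  have c: "ipom_iso (Tc ?P) (Sc ?Q)" by (rule compat_rep[OF X Y e])
  obtain R f g where G: "glueW ?P ?Q R f g" using glue_exists[OF w(1) v(1) c] by blast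
  have g: "glu ?P ?Q R f g" by (rule gluI[OF w(1) v(1) G])
  have pc: "pcomp X Y = cls R" using pcomp_cls[OF w(1) v(1) c G] w(3) v(3) by simp
  have wR: "wf_ipom R" by (rule glu.wfR[OF g])
  show "pcomp X Y \<in> iiPoms k" using pc iiPomsI[OF wR glu.widthR[OF g w(2) v(2)]] by simp
  have "cls (Sc R) = cls (Sc ?P)"
    using cls_eq_iff[OF wf_Sc[OF wR] wf_Sc[OF w(1)]] iso_sym[OF wf_Sc[OF w(1)] glu.iso_ScR[OF g]] by blast
  then show "pomS (pcomp X Y) = pomS X" using pc pomS_cls[OF wR] pomS_cls[OF w(1)] w(3) by simp
  have "cls (Tc R) = cls (Tc ?Q)"
    using cls_eq_iff[OF wf_Tc[OF wR] wf_Tc[OF v(1)]] iso_sym[OF wf_Tc[OF v(1)] glu.iso_TcR[OF g]] by blast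
  then show "pomT (pcomp X Y) = pomT Y" using pc pomT_cls[OF wR] pomT_cls[OF v(1)] v(3) by simp
qed

lemma pcomp_assoc:
  assumes X: "X \<in> iiPoms k" and Y: "Y \<in> iiPoms k" and Z: "Z \<in> iiPoms k"
    and e1: "pomS Y = pomT X" and e2: "pomS Z = pomT Y"
  shows "pcomp (pcomp X Y) Z = pcomp X (pcomp Y Z)"
proof -
  let ?P = "rep X" and ?Q = "rep Y" and ?Z = "rep Z"
  have w: "wf_ipom ?P" "cls ?P = X" using iiPoms_rep[OF X] by auto
  have v: "wf_ipom ?Q" "cls ?Q = Y" using iiPoms_rep[OF Y] by auto
  have u: "wf_ipom ?Z" "cls ?Z = Z" using iiPoms_rep[OF Z] by auto
  have c1: "ipom_iso (Tc ?P) (Sc ?Q)" by (rule compat_rep[OF X Y e1])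
  have c2: "ipom_iso (Tc ?Q) (Sc ?Z)" by (rule compat_rep[OF Y Z e2])
  obtain R1 f1 g1 where G1: "glueW ?P ?Q R1 f1 g1" using glue_exists[OF w(1) v(1) c1] by blast
  have ga: "glu ?P ?Q R1 f1 g1" by (rule gluI[OF w(1) v(1) G1])
  have wR1: "wf_ipom R1" by (rule glu.wfR[OF ga])
  have c3: "ipom_iso (Tc R1) (Sc ?Z)"
    using iso_trans[OF iso_sym[OF wf_Tc[OF v(1)] glu.iso_TcR[OF ga]] c2] .
  obtain W f2 g2 where G2: "glueW R1 ?Z W f2 g2" using glue_exists[OF wR1 u(1) c3] by blast
  have gb: "glu R1 ?Z W f2 g2" by (rule gluI[OF wR1 u(1) G2])
  have g3: "glu3 ?P ?Q R1 ?Z W f1 g1 f2 g2" unfolding glu3_def using ga gb by blast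
  let ?R2 = "glu3.R2 ?Q ?Z W g1 f2 g2"
  have G3: "glueW ?Q ?Z ?R2 (f2 \<circ> g1) g2" by (rule glu3.glue2[OF g3])
  have G4: "glueW ?P ?R2 W (f2 \<circ> f1) id" by (rule glu3.glue1[OF g3])
  have gc: "glu ?Q ?Z ?R2 (f2 \<circ> g1) g2" by (rule gluI[OF v(1) u(1) G3])
  have wR2: "wf_ipom ?R2" by (rule glu.wfR[OF gc])
  have c4: "ipom_iso (Tc ?P) (Sc ?R2)" using iso_trans[OF c1 glu.iso_ScR[OF gc]] .
  have "pcomp X Y = cls R1" using pcomp_cls[OF w(1) v(1) c1 G1] w v by simp
  then have L: "pcomp (pcomp X Y) Z = cls W" using pcomp_cls[OF wR1 u(1) c3 G2] u by simp
  have "pcomp Y Z = cls ?R2" using pcomp_cls[OF v(1) u(1) c2 G3] v u by simp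
  then have "pcomp X (pcomp Y Z) = cls W" using pcomp_cls[OF w(1) wR2 c4 G4] w by simp
  then show ?thesis using L by simp
qed

lemma pcomp_rid:
  assumes X: "X \<in> iiPoms k"
  shows "pcomp X (pomT X) = X"
proof -
  let ?P = "rep X"
  have w: "wf_ipom ?P" "cls ?P = X" using iiPoms_rep[OF X] by auto
  have pt: "pomT X = cls (Tc ?P)" unfolding pomT_def Tc_def ..
  have c: "ipom_iso (Tc ?P) (Sc (Tc ?P))" unfolding Sc_Tc by (rule iso_refl)
  have "pcomp (cls ?P) (cls (Tc ?P)) = cls ?P"
    by (rule pcomp_cls[OF w(1) wf_Tc[OF w(1)] c glue_rid[OF w(1)]])
  then show ?thesis using pt w(2) by simp
qed


lemma res_parts: "fst (res k L P) = pomS P" "fst (snd (res k L P)) = pomT P"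
  "snd (snd (res k L P)) = {Q \<in> iiPoms k. pomS Q = pomT P \<and> pcomp P Q \<in> L}"
  unfolding res_def by simp_all

lemma res_cong:
  assumes P1: "P1 \<in> iiPoms k" and P2: "P2 \<in> iiPoms k" and e: "res k L P1 = res k L P2"
    and B: "B \<in> iiPoms k" and c: "pomS B = pomT P1"
  shows "res k L (pcomp P1 B) = res k L (pcomp P2 B)"
proof -
  have eS: "pomS P1 = pomS P2" and eT: "pomT P1 = pomT P2"
    and e3: "{Q \<in> iiPoms k. pomS Q = pomT P1 \<and> pcomp P1 Q \<in> L} =
             {Q \<in> iiPoms k. pomS Q = pomT P2 \<and> pcomp P2 Q \<in> L}"
    using e res_parts[of k L P1] res_parts[of k L P2] by metis+
  have c2: "pomS B = pomT P2" using c eT by simp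
  note p1 = pcomp_props[OF P1 B c] and p2 = pcomp_props[OF P2 B c2]
  have "pcomp (pcomp P1 B) Q \<in> L \<longleftrightarrow> pcomp (pcomp P2 B) Q \<in> L"
    if Q: "Q \<in> iiPoms k" and cq: "pomS Q = pomT B" for Q
  proof -
    note bq = pcomp_props[OF B Q cq]
    have "pcomp (pcomp P1 B) Q = pcomp P1 (pcomp B Q)" by (rule pcomp_assoc[OF P1 B Q c cq])
    moreover have "pcomp (pcomp P2 B) Q = pcomp P2 (pcomp B Q)" by (rule pcomp_assoc[OF P2 B Q c2 cq])
    moreover have "pcomp P1 (pcomp B Q) \<in> L \<longleftrightarrow> pcomp P2 (pcomp B Q) \<in> L"
    proof -
      have "pcomp B Q \<in> iiPoms k" "pomS (pcomp B Q) = pomT P1" "pomS (pcomp B Q) = pomT P2"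
        using bq c c2 by auto
      then show ?thesis using e3 by blast
    qed
    ultimately show ?thesis by simp
  qed
  then have "{Q \<in> iiPoms k. pomS Q = pomT (pcomp P1 B) \<and> pcomp (pcomp P1 B) Q \<in> L} =
             {Q \<in> iiPoms k. pomS Q = pomT (pcomp P2 B) \<and> pcomp (pcomp P2 B) Q \<in> L}"
    using p1(3) p2(3) by auto
  then show ?thesis unfolding res_def using p1(2) p2(2) p1(3) p2(3) eS by simp
qed

lemma suff_act_eq:
  assumes P: "P \<in> iiPoms k" and A: "A \<in> iiPoms k" and c: "pomS A = pomT P"
  shows "suff_act k L (res k L P) A = res k L (pcomp P A)"
proof -
  let ?P' = "SOME P'. P' \<in> iiPoms k \<and> res k L P' = res k L P"
  have ex: "\<exists>P'. P' \<in> iiPoms k \<and> res k L P' = res k L P" using P by blast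
  have "?P' \<in> iiPoms k \<and> res k L ?P' = res k L P" by (rule someI_ex[OF ex])
  then have P': "?P' \<in> iiPoms k" "res k L ?P' = res k L P" by auto
  have "fst (snd (res k L ?P')) = fst (snd (res k L P))" using P'(2) by simp
  then have "pomT ?P' = pomT P" by (simp add: res_parts)
  then have "res k L (pcomp ?P' A) = res k L (pcomp P A)"
    using res_cong[OF P'(1) P P'(2) A] c by simp
  then show ?thesis unfolding suff_act_def by simp
qed

lemma suff_src_res: "suff_src (res k L P) = pomS P" unfolding suff_src_def res_def by simp
lemma suff_tgt_res: "suff_tgt (res k L P) = pomT P" unfolding suff_tgt_def res_def by simp

theorem mainTheorem5:
  fixes k :: nat and L :: "('a::finite) pom set"
  assumes "L \<subseteq> iiPoms k"
  shows "module_over (iiObj k) (iiPoms k) pomS pomT pcomp idP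
           (suff k L) suff_src suff_tgt (suff_act k L)
       \<and> module_hom (iiPoms k) pomS (iiPoms k) pomS pomT pcomp
           (suff k L) suff_src suff_tgt (suff_act k L) (res k L)
       \<and> L = {P \<in> iiPoms k. res k L P \<in> res k L ` L}
       \<and> (\<forall>(M :: 'm set) (s :: 'm \<Rightarrow> 'a pom) (t :: 'm \<Rightarrow> 'a pom) (act :: 'm \<Rightarrow> 'a pom \<Rightarrow> 'm)
            (K :: 'm set) (\<psi> :: 'a pom \<Rightarrow> 'm).
            module_over (iiObj k) (iiPoms k) pomS pomT pcomp idP M s t act
            \<and> K \<subseteq> M
            \<and> module_hom (iiPoms k) pomS (iiPoms k) pomS pomT pcomp M s t act \<psi>
            \<and> \<psi> ` iiPoms k = M
            \<and> L = {P \<in> iiPoms k. \<psi> P \<in> K}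
            \<longrightarrow> (\<exists>f. module_hom (iiPoms k) pomS M s t act
                        (suff k L) suff_src suff_tgt (suff_act k L) f
                     \<and> f ` M = suff k L
                     \<and> f ` K = res k L ` L
                     \<and> (\<forall>P\<in>iiPoms k. f (\<psi> P) = res k L P)))"
proof -
  have Lsub: "L \<subseteq> iiPoms k" by (rule assms)
  have MO: "module_over (iiObj k) (iiPoms k) pomS pomT pcomp idP
           (suff k L) suff_src suff_tgt (suff_act k L)"
    unfolding module_over_def
  proof (intro conjI ballI impI)
    fix m assume "m \<in> suff k L"
    then obtain P where P: "P \<in> iiPoms k" "m = res k L P" unfolding suff_def by blast
    show "suff_src m \<in> iiObj k" using pomT_props(5)[OF P(1)] by (simp add: P(2) suff_src_res)
    show "suff_tgt m \<in> iiObj k" using pomT_props(4)[OF P(1)] by (simp add: P(2) suff_tgt_res)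
  next
    fix m and \<alpha> :: "'a pom" assume m: "m \<in> suff k L" and \<alpha>: "\<alpha> \<in> iiPoms k" and c: "pomS \<alpha> = suff_tgt m"
    obtain P where P: "P \<in> iiPoms k" "m = res k L P" using m unfolding suff_def by blast
    have c': "pomS \<alpha> = pomT P" using c by (simp add: P(2) suff_tgt_res)
    have a: "suff_act k L m \<alpha> = res k L (pcomp P \<alpha>)" using suff_act_eq[OF P(1) \<alpha> c'] P by simp
    note pp = pcomp_props[OF P(1) \<alpha> c']
    show "suff_act k L m \<alpha> \<in> suff k L" using a pp(1) unfolding suff_def by blast
    show "suff_src (suff_act k L m \<alpha>) = suff_src m"
      using pp(2) by (simp add: suff_act_eq[OF P(1) \<alpha> c'] P(2) suff_src_res)
    show "suff_tgt (suff_act k L m \<alpha>) = pomT \<alpha>" using pp(3) by (simp add: a suff_tgt_res)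
  next
    fix m assume m: "m \<in> suff k L"
    obtain P where P: "P \<in> iiPoms k" "m = res k L P" using m unfolding suff_def by blast
    note pt = pomT_props[OF P(1)]
    have "idP (suff_tgt m) = pomT P" unfolding idP_def by (simp add: P(2) suff_tgt_res)
    then have "suff_act k L m (idP (suff_tgt m)) = res k L (pcomp P (pomT P))"
      using suff_act_eq[OF P(1) pt(1) pt(2)] P by simp
    then show "suff_act k L m (idP (suff_tgt m)) = m" using pcomp_rid[OF P(1)] P by simp
  next
    fix m and \<alpha> \<beta> :: "'a pom" assume m: "m \<in> suff k L" and \<alpha>: "\<alpha> \<in> iiPoms k" and \<beta>: "\<beta> \<in> iiPoms k"
      and c1: "pomS \<alpha> = suff_tgt m" and c2: "pomS \<beta> = pomT \<alpha>"
    obtain P where P: "P \<in> iiPoms k" "m = res k L P" using m unfolding suff_def by blast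
    have c1': "pomS \<alpha> = pomT P" using c1 by (simp add: P(2) suff_tgt_res)
    note pa = pcomp_props[OF P(1) \<alpha> c1']
    note ab = pcomp_props[OF \<alpha> \<beta> c2]
    have "suff_act k L (suff_act k L m \<alpha>) \<beta> = suff_act k L (res k L (pcomp P \<alpha>)) \<beta>"
      using suff_act_eq[OF P(1) \<alpha> c1'] P by simp
    also have "\<dots> = res k L (pcomp (pcomp P \<alpha>) \<beta>)"
      using suff_act_eq[OF pa(1) \<beta>] c2 pa(3) by simp
    also have "\<dots> = res k L (pcomp P (pcomp \<alpha> \<beta>))" using pcomp_assoc[OF P(1) \<alpha> \<beta> c1' c2] by simp
    also have "\<dots> = suff_act k L m (pcomp \<alpha> \<beta>)"
      using suff_act_eq[OF P(1) ab(1)] ab(2) c1' P by simp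
    finally show "suff_act k L (suff_act k L m \<alpha>) \<beta> = suff_act k L m (pcomp \<alpha> \<beta>)" .
  qed
  have MH: "module_hom (iiPoms k) pomS (iiPoms k) pomS pomT pcomp
           (suff k L) suff_src suff_tgt (suff_act k L) (res k L)"
    unfolding module_hom_def
  proof (intro conjI ballI impI)
    fix P :: "'a pom" assume P: "P \<in> iiPoms k"
    show "res k L P \<in> suff k L" using P unfolding suff_def by blast
    show "suff_src (res k L P) = pomS P" by (rule suff_src_res)
    show "suff_tgt (res k L P) = pomT P" by (rule suff_tgt_res)
  next
    fix P \<alpha> :: "'a pom" assume P: "P \<in> iiPoms k" and \<alpha>: "\<alpha> \<in> iiPoms k" and c: "pomS \<alpha> = pomT P"
    show "res k L (pcomp P \<alpha>) = suff_act k L (res k L P) \<alpha>" using suff_act_eq[OF P \<alpha> c] by simp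
  qed
  have LE: "L = {P \<in> iiPoms k. res k L P \<in> res k L ` L}"
  proof
    show "L \<subseteq> {P \<in> iiPoms k. res k L P \<in> res k L ` L}" using Lsub by blast
  next
    show "{P \<in> iiPoms k. res k L P \<in> res k L ` L} \<subseteq> L"
    proof
      fix P assume "P \<in> {P \<in> iiPoms k. res k L P \<in> res k L ` L}"
      then obtain P0 where P: "P \<in> iiPoms k" and P0: "P0 \<in> L" and e: "res k L P = res k L P0" by blast
      have P0i: "P0 \<in> iiPoms k" using P0 Lsub by blast
      have eT: "pomT P = pomT P0" using arg_cong[OF e, of "\<lambda>x. fst (snd x)"] by (simp add: res_parts)
      have e3: "{Q \<in> iiPoms k. pomS Q = pomT P \<and> pcomp P Q \<in> L} =
                {Q \<in> iiPoms k. pomS Q = pomT P0 \<and> pcomp P0 Q \<in> L}"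
        using arg_cong[OF e, of "\<lambda>x. snd (snd x)"] by (simp add: res_parts)
      note pt = pomT_props[OF P0i]
      have "pcomp P0 (pomT P0) \<in> L" using pcomp_rid[OF P0i] P0 by simp
      then have "pomT P0 \<in> {Q \<in> iiPoms k. pomS Q = pomT P0 \<and> pcomp P0 Q \<in> L}" using pt by simp
      then have "pcomp P (pomT P0) \<in> L" using e3 by blast
      then show "P \<in> L" using pcomp_rid[OF P] eT by simp
    qed
  qed
  have UP: "\<forall>(M :: 'm set) (s :: 'm \<Rightarrow> 'a pom) (t :: 'm \<Rightarrow> 'a pom) (act :: 'm \<Rightarrow> 'a pom \<Rightarrow> 'm)
            (K :: 'm set) (\<psi> :: 'a pom \<Rightarrow> 'm).
            module_over (iiObj k) (iiPoms k) pomS pomT pcomp idP M s t act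
            \<and> K \<subseteq> M
            \<and> module_hom (iiPoms k) pomS (iiPoms k) pomS pomT pcomp M s t act \<psi>
            \<and> \<psi> ` iiPoms k = M
            \<and> L = {P \<in> iiPoms k. \<psi> P \<in> K}
            \<longrightarrow> (\<exists>f. module_hom (iiPoms k) pomS M s t act
                        (suff k L) suff_src suff_tgt (suff_act k L) f
                     \<and> f ` M = suff k L
                     \<and> f ` K = res k L ` L
                     \<and> (\<forall>P\<in>iiPoms k. f (\<psi> P) = res k L P))"
  proof (intro allI impI)
    fix M :: "'m set" and s t :: "'m \<Rightarrow> 'a pom" and act :: "'m \<Rightarrow> 'a pom \<Rightarrow> 'm"
      and K :: "'m set" and \<psi> :: "'a pom \<Rightarrow> 'm"
    assume H: "module_over (iiObj k) (iiPoms k) pomS pomT pcomp idP M s t act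
            \<and> K \<subseteq> M
            \<and> module_hom (iiPoms k) pomS (iiPoms k) pomS pomT pcomp M s t act \<psi>
            \<and> \<psi> ` iiPoms k = M
            \<and> L = {P \<in> iiPoms k. \<psi> P \<in> K}"
    have KM: "K \<subseteq> M" using H by blast
    have hom: "module_hom (iiPoms k) pomS (iiPoms k) pomS pomT pcomp M s t act \<psi>" using H by blast
    have sur: "\<psi> ` iiPoms k = M" using H by blast
    have LK: "L = {P \<in> iiPoms k. \<psi> P \<in> K}" using H by blast
    have h1: "\<And>P. P \<in> iiPoms k \<Longrightarrow> \<psi> P \<in> M \<and> s (\<psi> P) = pomS P \<and> t (\<psi> P) = pomT P"
      using hom unfolding module_hom_def by blast
    have h2: "\<And>P \<alpha>. P \<in> iiPoms k \<Longrightarrow> \<alpha> \<in> iiPoms k \<Longrightarrow> pomS \<alpha> = pomT P \<Longrightarrow>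
        \<psi> (pcomp P \<alpha>) = act (\<psi> P) \<alpha>"
      using hom unfolding module_hom_def by blast
    have key: "res k L P1 = res k L P2"
      if P1: "P1 \<in> iiPoms k" and P2: "P2 \<in> iiPoms k" and e: "\<psi> P1 = \<psi> P2" for P1 P2
    proof -
      have eS: "pomS P1 = pomS P2" and eT: "pomT P1 = pomT P2" using h1[OF P1] h1[OF P2] e by auto
      have "pcomp P1 Q \<in> L \<longleftrightarrow> pcomp P2 Q \<in> L" if Q: "Q \<in> iiPoms k" and c: "pomS Q = pomT P1" for Q
      proof -
        have c2: "pomS Q = pomT P2" using c eT by simp
        have "\<psi> (pcomp P1 Q) = \<psi> (pcomp P2 Q)" using h2[OF P1 Q c] h2[OF P2 Q c2] e by simp
        moreover have "pcomp P1 Q \<in> iiPoms k" "pcomp P2 Q \<in> iiPoms k"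
          using pcomp_props(1)[OF P1 Q c] pcomp_props(1)[OF P2 Q c2] by auto
        moreover have mem: "\<And>X. X \<in> L \<longleftrightarrow> X \<in> iiPoms k \<and> \<psi> X \<in> K" by (subst LK) simp
        ultimately show ?thesis by simp
      qed
      then have "{Q \<in> iiPoms k. pomS Q = pomT P1 \<and> pcomp P1 Q \<in> L} =
                 {Q \<in> iiPoms k. pomS Q = pomT P2 \<and> pcomp P2 Q \<in> L}" using eT by auto
      then show ?thesis unfolding res_def using eS eT by simp
    qed
    define f where "f m = res k L (SOME P. P \<in> iiPoms k \<and> \<psi> P = m)" for m
    have fpsi: "f (\<psi> P) = res k L P" if P: "P \<in> iiPoms k" for P
    proof -
      let ?P = "SOME P'. P' \<in> iiPoms k \<and> \<psi> P' = \<psi> P"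
      have ex: "\<exists>P'. P' \<in> iiPoms k \<and> \<psi> P' = \<psi> P" using P by blast
      have "?P \<in> iiPoms k \<and> \<psi> ?P = \<psi> P" by (rule someI_ex[OF ex])
      then show ?thesis unfolding f_def using key P by blast
    qed
    have fhom: "module_hom (iiPoms k) pomS M s t act (suff k L) suff_src suff_tgt (suff_act k L) f"
      unfolding module_hom_def
    proof (intro conjI ballI impI)
      fix m assume "m \<in> M"
      then obtain P where P: "P \<in> iiPoms k" "m = \<psi> P" using sur by blast
      show "f m \<in> suff k L" using fpsi P unfolding suff_def by simp
      show "suff_src (f m) = s m" using fpsi[OF P(1)] h1[OF P(1)] by (simp add: P(2) suff_src_res)
      show "suff_tgt (f m) = t m" using fpsi[OF P(1)] h1[OF P(1)] by (simp add: P(2) suff_tgt_res)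
    next
      fix m \<alpha> assume m: "m \<in> M" and \<alpha>: "\<alpha> \<in> iiPoms k" and c: "pomS \<alpha> = t m"
      obtain P where P: "P \<in> iiPoms k" "m = \<psi> P" using m sur by blast
      have c': "pomS \<alpha> = pomT P" using c h1[OF P(1)] by (simp add: P(2))
      have "f (act m \<alpha>) = f (\<psi> (pcomp P \<alpha>))" using h2[OF P(1) \<alpha> c'] P by simp
      also have "\<dots> = res k L (pcomp P \<alpha>)" using fpsi pcomp_props(1)[OF P(1) \<alpha> c'] by blast
      also have "\<dots> = suff_act k L (res k L P) \<alpha>" using suff_act_eq[OF P(1) \<alpha> c'] by simp
      also have "\<dots> = suff_act k L (f m) \<alpha>" using fpsi P by simp
      finally show "f (act m \<alpha>) = suff_act k L (f m) \<alpha>" .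
    qed
    have fM: "f ` M = suff k L"
    proof -
      have "f ` M = f ` \<psi> ` iiPoms k" using sur by simp
      also have "\<dots> = res k L ` iiPoms k" using fpsi by (simp add: image_image)
      finally show ?thesis unfolding suff_def .
    qed
    have fK: "f ` K = res k L ` L"
    proof
      show "f ` K \<subseteq> res k L ` L"
      proof
        fix y assume "y \<in> f ` K"
        then obtain m where m: "m \<in> K" "y = f m" by blast
        then obtain P where P: "P \<in> iiPoms k" "m = \<psi> P" using KM sur by blast
        have "P \<in> L" using LK P m by blast
        then show "y \<in> res k L ` L" using fpsi P m by simp
      qed
    next
      show "res k L ` L \<subseteq> f ` K"
      proof
        fix y assume "y \<in> res k L ` L"
        then obtain P where P: "P \<in> L" "y = res k L P" by blast
        have "P \<in> iiPoms k" "\<psi> P \<in> K" using P LK by auto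
        then show "y \<in> f ` K" using fpsi P by (metis image_eqI)
      qed
    qed
    show "\<exists>f. module_hom (iiPoms k) pomS M s t act
                        (suff k L) suff_src suff_tgt (suff_act k L) f
                     \<and> f ` M = suff k L
                     \<and> f ` K = res k L ` L
                     \<and> (\<forall>P\<in>iiPoms k. f (\<psi> P) = res k L P)"
      using fhom fM fK fpsi by blast
  qed
  show ?thesis using MO MH LE UP by blast
qed


end
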